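(* Let $p$ be an odd prime and $G$ the non-abelian group of order $p^3$ and exponent $p$. Let $S$ be a sequence over $G$ of length $3p-2$ none of whose terms lies in $Z(G)$, and suppose that for some non-central $z$-class $\mathcal{K}$ of $G$ exactly $p$ terms of $S$ (counted with multiplicity) lie in $\mathcal{K}$, and that these $p$ terms are pairwise conjugate in $G$. Then $S$ has a non-empty product-one subsequence.
   Context: $G = \langle x, y : x^p = y^p = 1,\ [y,x] \text{ central}\rangle$ is the Heisenberg group of order $p^3$ and exponent $p$, with $Z(G)=[G,G]$ of order $p$. For $g\in G\setminus Z(G)$, its $z$-class is $\mathcal{K}[g] = \{g^\lambda u : 1\le\lambda\le p-1,\ u\in Z(G)\} = C_G(g)\setminus Z(G)$. A sequence over $G$ is a finite unordered list (multiset) of elements of $G$; a subsequence is a sub-multiset; a non-empty sequence is product-one if some ordering of its terms has product $1$. *)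

theory Defs
  imports "HOL-Algebra.Group" "HOL-Library.Multiset" "HOL-Computational_Algebra.Primes"
begin

definition grp_center :: "('a, 'b) monoid_scheme \<Rightarrow> 'a set" where
  "grp_center G = {z \<in> carrier G. \<forall>g \<in> carrier G. z \<otimes>\<^bsub>G\<^esub> g = g \<otimes>\<^bsub>G\<^esub> z}"

definition zclass :: "('a, 'b) monoid_scheme \<Rightarrow> nat \<Rightarrow> 'a \<Rightarrow> 'a set" where
  "zclass G p g = {(g [^]\<^bsub>G\<^esub> k) \<otimes>\<^bsub>G\<^esub> u | k u. 1 \<le> k \<and> k \<le> p - 1 \<and> u \<in> grp_center G}"

definition conjugate :: "('a, 'b) monoid_scheme \<Rightarrow> 'a \<Rightarrow> 'a \<Rightarrow> bool" where
  "conjugate G x y \<longleftrightarrow> (\<exists>h \<in> carrier G. y = h \<otimes>\<^bsub>G\<^esub> x \<otimes>\<^bsub>G\<^esub> inv\<^bsub>G\<^esub> h)"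

definition list_prod :: "('a, 'b) monoid_scheme \<Rightarrow> 'a list \<Rightarrow> 'a" where
  "list_prod G xs = foldr (\<lambda>x acc. x \<otimes>\<^bsub>G\<^esub> acc) xs \<one>\<^bsub>G\<^esub>"

definition product_one :: "('a, 'b) monoid_scheme \<Rightarrow> 'a multiset \<Rightarrow> bool" where
  "product_one G T \<longleftrightarrow> T \<noteq> {#} \<and> (\<exists>xs. mset xs = T \<and> list_prod G xs = \<one>\<^bsub>G\<^esub>)"

end

theory Submission
  imports Defs "HOL-Algebra.Group_Action"
begin


type_synonym ifun = "int \<Rightarrow> int \<Rightarrow> int"

definition Dx :: "ifun \<Rightarrow> ifun" where "Dx f = (\<lambda>x y. f x y - f (x - 1) y)"
definition Dy :: "ifun \<Rightarrow> ifun" where "Dy f = (\<lambda>x y. f x y - f x (y - 1))"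
definition Dv :: "int \<times> int \<Rightarrow> ifun \<Rightarrow> ifun" where
  "Dv v f = (\<lambda>x y. f x y - f (x - fst v) (y - snd v))"
definition addf :: "ifun \<Rightarrow> ifun \<Rightarrow> ifun" where "addf f g = (\<lambda>x y. f x y + g x y)"
definition per :: "nat \<Rightarrow> ifun \<Rightarrow> bool" where
  "per p f \<longleftrightarrow> (\<forall>x y. f (x - int p) y = f x y \<and> f x (y - int p) = f x y)"
definition zf :: "nat \<Rightarrow> ifun \<Rightarrow> bool" where
  "zf p f \<longleftrightarrow> (\<forall>x y. int p dvd f x y)"

fun DL :: "('x \<Rightarrow> int \<times> int) \<Rightarrow> 'x list \<Rightarrow> ifun \<Rightarrow> ifun" where
  "DL v [] f = f"
| "DL v (a # as) f = DL v as (Dv (v a) f)"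

lemma Dx_Dy: "Dx (Dy f) = Dy (Dx f)" by (simp add: Dx_def Dy_def fun_eq_iff algebra_simps)
lemma Dx_Dv: "Dx (Dv v f) = Dv v (Dx f)" by (simp add: Dx_def Dv_def fun_eq_iff algebra_simps)
lemma Dy_Dv: "Dy (Dv v f) = Dv v (Dy f)" by (simp add: Dy_def Dv_def fun_eq_iff algebra_simps)

lemma Dxn_Dy: "(Dx ^^ i) (Dy f) = Dy ((Dx ^^ i) f)"
  by (induction i) (auto simp: Dx_Dy)
lemma Dxn_Dv: "(Dx ^^ i) (Dv v f) = Dv v ((Dx ^^ i) f)"
  by (induction i) (auto simp: Dx_Dv)
lemma Dyn_Dv: "(Dy ^^ i) (Dv v f) = Dv v ((Dy ^^ i) f)"
  by (induction i) (auto simp: Dy_Dv)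
lemma Dxn_Dyn: "(Dx ^^ i) ((Dy ^^ j) f) = (Dy ^^ j) ((Dx ^^ i) f)"
  by (induction j) (auto simp: Dxn_Dy)

lemma Dx_add: "Dx (addf f g) = addf (Dx f) (Dx g)" by (simp add: Dx_def addf_def fun_eq_iff algebra_simps)
lemma Dy_add: "Dy (addf f g) = addf (Dy f) (Dy g)" by (simp add: Dy_def addf_def fun_eq_iff algebra_simps)
lemma Dv_add: "Dv v (addf f g) = addf (Dv v f) (Dv v g)" by (simp add: Dv_def addf_def fun_eq_iff algebra_simps)
lemma Dxn_add: "(Dx ^^ i) (addf f g) = addf ((Dx ^^ i) f) ((Dx ^^ i) g)"
  by (induction i) (auto simp: Dx_add)
lemma Dyn_add: "(Dy ^^ i) (addf f g) = addf ((Dy ^^ i) f) ((Dy ^^ i) g)"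
  by (induction i) (auto simp: Dy_add)
lemma DL_add: "DL v as (addf f g) = addf (DL v as f) (DL v as g)"
  by (induction as arbitrary: f g) (auto simp: Dv_add)

lemma per_Dx: assumes "per p f" shows "per p (Dx f)"
proof -
  have hx: "\<And>x y. f (x - int p) y = f x y" and hy: "\<And>x y. f x (y - int p) = f x y"
    using assms by (auto simp add: per_def)
  have 1: "f (x - int p - 1) y = f (x - 1) y" for x y
    using hx[of "x - 1" y] by (simp add: algebra_simps)
  show ?thesis unfolding per_def Dx_def using 1 hx hy by simp
qed
lemma per_Dy: assumes "per p f" shows "per p (Dy f)"
proof -
  have hx: "\<And>x y. f (x - int p) y = f x y" and hy: "\<And>x y. f x (y - int p) = f x y"
    using assms by (auto simp add: per_def)
  have 1: "f x (y - int p - 1) = f x (y - 1)" for x y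
    using hy[of x "y - 1"] by (simp add: algebra_simps)
  show ?thesis unfolding per_def Dy_def using 1 hx hy by simp
qed
lemma per_Dxn: "per p f \<Longrightarrow> per p ((Dx ^^ i) f)" by (induction i) (auto simp: per_Dx)
lemma per_Dyn: "per p f \<Longrightarrow> per p ((Dy ^^ i) f)" by (induction i) (auto simp: per_Dy)

lemma zf_Dx: "zf p f \<Longrightarrow> zf p (Dx f)" by (auto simp: zf_def Dx_def)
lemma zf_Dy: "zf p f \<Longrightarrow> zf p (Dy f)" by (auto simp: zf_def Dy_def)
lemma zf_Dv: "zf p f \<Longrightarrow> zf p (Dv v f)" by (auto simp: zf_def Dv_def)
lemma zf_Dxn: "zf p f \<Longrightarrow> zf p ((Dx ^^ i) f)" by (induction i) (auto simp: zf_Dx)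
lemma zf_Dyn: "zf p f \<Longrightarrow> zf p ((Dy ^^ i) f)" by (induction i) (auto simp: zf_Dy)
lemma zf_DL: "zf p f \<Longrightarrow> zf p (DL v as f)" by (induction as arbitrary: f) (auto simp: zf_Dv)
lemma zf_add: "zf p f \<Longrightarrow> zf p g \<Longrightarrow> zf p (addf f g)" by (auto simp: zf_def addf_def fun_eq_iff algebra_simps)


definition Ax :: "nat \<Rightarrow> ifun \<Rightarrow> ifun" where
  "Ax a h = (\<lambda>x y. \<Sum>t<a. h (x - int t) y)"
definition By :: "nat \<Rightarrow> nat \<Rightarrow> ifun \<Rightarrow> ifun" where
  "By a b h = (\<lambda>x y. \<Sum>t<b. h (x - int a) (y - int t))"

lemma Dx_Ax: "Dx (Ax a h) x y = h x y - h (x - int a) y"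
proof (induction a)
  case 0 then show ?case by (simp add: Dx_def Ax_def)
next
  case (Suc a)
  have "Dx (Ax (Suc a) h) x y = Dx (Ax a h) x y + h (x - int a) y - h (x - 1 - int a) y"
    by (simp add: Dx_def Ax_def algebra_simps)
  then show ?case using Suc by (simp add: algebra_simps)
qed

lemma Dy_By: "Dy (By a b h) x y = h (x - int a) y - h (x - int a) (y - int b)"
proof (induction b)
  case 0 then show ?case by (simp add: Dy_def By_def)
next
  case (Suc b)
  have "Dy (By a (Suc b) h) x y = Dy (By a b h) x y + h (x - int a) (y - int b) - h (x - int a) (y - 1 - int b)"
    by (simp add: Dy_def By_def algebra_simps)
  then show ?case using Suc by (simp add: algebra_simps)
qed

lemma Dv_decomp: "Dv (int a, int b) h = addf (Dx (Ax a h)) (Dy (By a b h))"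
  by (simp add: fun_eq_iff Dv_def addf_def Dx_Ax Dy_By)

lemma per_x: assumes "per p h" shows "h (x + int p * k) y = h x y"
proof -
  have hx: "\<And>x y. h (x - int p) y = h x y" using assms by (simp add: per_def)
  show ?thesis
  proof (induction k rule: int_induct[where k=0])
    case base then show ?case by simp
  next
    case (step1 i)
    have "h (x + int p * (i + 1)) y = h (x + int p * (i+1) - int p) y"
      using hx[of "x + int p * (i+1)" y] by simp
    also have "\<dots> = h (x + int p * i) y" by (simp add: algebra_simps)
    finally show ?case using step1 by simp
  next
    case (step2 i)
    have "h (x + int p * (i - 1)) y = h (x + int p * i - int p) y" by (simp add: algebra_simps)
    also have "\<dots> = h (x + int p * i) y" using hx[of "x + int p * i" y] by simp
    finally show ?case using step2 by simp
  qed
qed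

lemma per_y: assumes "per p h" shows "h x (y + int p * k) = h x y"
proof -
  have hy: "\<And>x y. h x (y - int p) = h x y" using assms by (simp add: per_def)
  show ?thesis
  proof (induction k rule: int_induct[where k=0])
    case base then show ?case by simp
  next
    case (step1 i)
    have "h x (y + int p * (i + 1)) = h x (y + int p * (i+1) - int p)"
      using hy[of x "y + int p * (i+1)"] by simp
    also have "\<dots> = h x (y + int p * i)" by (simp add: algebra_simps)
    finally show ?case using step1 by simp
  next
    case (step2 i)
    have "h x (y + int p * (i - 1)) = h x (y + int p * i - int p)" by (simp add: algebra_simps)
    also have "\<dots> = h x (y + int p * i)" using hy[of x "y + int p * i"] by simp
    finally show ?case using step2 by simp
  qed
qed

lemma per_mod: assumes "per p h" shows "h (x - a) (y - b) = h (x - a mod int p) (y - b mod int p)"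
proof -
  have a: "a = int p * (a div int p) + a mod int p" by simp
  have b: "b = int p * (b div int p) + b mod int p" by simp
  have "h (x - a) (y - b) = h ((x - a mod int p) + int p * (- (a div int p))) (y - b)"
    by (subst a) (simp add: algebra_simps)
  also have "\<dots> = h (x - a mod int p) (y - b)" by (rule per_x[OF assms])
  also have "\<dots> = h (x - a mod int p) ((y - b mod int p) + int p * (- (b div int p)))"
    by (subst b) (simp add: algebra_simps)
  also have "\<dots> = h (x - a mod int p) (y - b mod int p)" by (rule per_y[OF assms])
  finally show ?thesis .
qed

lemma Dv_per: assumes "per p h" "p > 0"
  shows "Dv v h = Dv (int (nat (fst v mod int p)), int (nat (snd v mod int p))) h"
proof -
  have "\<And>x y. h (x - fst v) (y - snd v) = h (x - int (nat (fst v mod int p))) (y - int (nat (snd v mod int p)))"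
    using per_mod[OF assms(1)] assms(2) by simp
  then show ?thesis by (simp add: Dv_def fun_eq_iff)
qed

lemma per_Ax: assumes "per p h" shows "per p (Ax a h)"
proof -
  have hx: "\<And>x y. h (x - int p) y = h x y" and hy: "\<And>x y. h x (y - int p) = h x y"
    using assms by (auto simp add: per_def)
  have 1: "h (x - int p - int t) y = h (x - int t) y" for x y t
    using hx[of "x - int t" y] by (simp add: algebra_simps)
  show ?thesis unfolding per_def Ax_def using 1 hy by simp
qed

lemma per_By: assumes "per p h" shows "per p (By a b h)"
proof -
  have hx: "\<And>x y. h (x - int p) y = h x y" and hy: "\<And>x y. h x (y - int p) = h x y"
    using assms by (auto simp add: per_def)
  have 1: "h (x - int p - int a) y = h (x - int a) y" for x y
    using hx[of "x - int a" y] by (simp add: algebra_simps)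
  have 2: "h x (y - int p - int t) = h x (y - int t)" for x y t
    using hy[of x "y - int t"] by (simp add: algebra_simps)
  show ?thesis unfolding per_def By_def using 1 2 by simp
qed


lemma Dxn_formula:
  "(Dx ^^ n) h x y = (\<Sum>t\<le>n. (-1)^t * int (n choose t) * h (x - int t) y)"
proof (induction n arbitrary: x)
  case 0 then show ?case by simp
next
  case (Suc n)
  have "(Dx ^^ Suc n) h x y = (Dx ^^ n) h x y - (Dx ^^ n) h (x - 1) y"
    by (simp add: Dx_def)
  also have "\<dots> = (\<Sum>t\<le>n. (-1)^t * int (n choose t) * h (x - int t) y)
                 - (\<Sum>t\<le>n. (-1)^t * int (n choose t) * h (x - 1 - int t) y)"
    using Suc by simp
  also have "\<dots> = (\<Sum>t\<le>Suc n. (-1)^t * int (Suc n choose t) * h (x - int t) y)"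
  proof -
    have A: "(\<Sum>t\<le>Suc n. (-1)^t * int (Suc n choose t) * h (x - int t) y)
       = h x y + (\<Sum>t\<le>n. (-1)^(Suc t) * int (Suc n choose Suc t) * h (x - int (Suc t)) y)"
      by (subst sum.atMost_Suc_shift) simp
    have B: "(\<Sum>t\<le>n. (-1)^(Suc t) * int (Suc n choose Suc t) * h (x - int (Suc t)) y)
       = (\<Sum>t\<le>n. (-1)^(Suc t) * int (n choose t) * h (x - int (Suc t)) y)
         + (\<Sum>t\<le>n. (-1)^(Suc t) * int (n choose Suc t) * h (x - int (Suc t)) y)"
      by (simp add: sum.distrib[symmetric] algebra_simps)
    have C: "(\<Sum>t\<le>n. (-1)^(Suc t) * int (n choose t) * h (x - int (Suc t)) y)
       = - (\<Sum>t\<le>n. (-1)^t * int (n choose t) * h (x - 1 - int t) y)"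
      by (simp add: sum_negf[symmetric] algebra_simps)
    have D0: "(\<Sum>t\<le>Suc n. (-1)^t * int (n choose t) * h (x - int t) y)
       = h x y + (\<Sum>t\<le>n. (-1)^(Suc t) * int (n choose Suc t) * h (x - int (Suc t)) y)"
      by (subst sum.atMost_Suc_shift) simp
    have D1: "(\<Sum>t\<le>Suc n. (-1)^t * int (n choose t) * h (x - int t) y)
       = (\<Sum>t\<le>n. (-1)^t * int (n choose t) * h (x - int t) y)"
      by simp
    show ?thesis using A B C D0 D1 by simp
  qed
  finally show ?case .
qed

lemma Dyn_formula:
  "(Dy ^^ n) h x y = (\<Sum>t\<le>n. (-1)^t * int (n choose t) * h x (y - int t))"
proof (induction n arbitrary: y)
  case 0 then show ?case by simp
next
  case (Suc n)
  have "(Dy ^^ Suc n) h x y = (Dy ^^ n) h x y - (Dy ^^ n) h x (y - 1)"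
    by (simp add: Dy_def)
  also have "\<dots> = (\<Sum>t\<le>n. (-1)^t * int (n choose t) * h x (y - int t))
                 - (\<Sum>t\<le>n. (-1)^t * int (n choose t) * h x (y - 1 - int t))"
    using Suc by simp
  also have "\<dots> = (\<Sum>t\<le>Suc n. (-1)^t * int (Suc n choose t) * h x (y - int t))"
  proof -
    have A: "(\<Sum>t\<le>Suc n. (-1)^t * int (Suc n choose t) * h x (y - int t))
       = h x y + (\<Sum>t\<le>n. (-1)^(Suc t) * int (Suc n choose Suc t) * h x (y - int (Suc t)))"
      by (subst sum.atMost_Suc_shift) simp
    have B: "(\<Sum>t\<le>n. (-1)^(Suc t) * int (Suc n choose Suc t) * h x (y - int (Suc t)))
       = (\<Sum>t\<le>n. (-1)^(Suc t) * int (n choose t) * h x (y - int (Suc t)))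
         + (\<Sum>t\<le>n. (-1)^(Suc t) * int (n choose Suc t) * h x (y - int (Suc t)))"
      by (simp add: sum.distrib[symmetric] algebra_simps)
    have C: "(\<Sum>t\<le>n. (-1)^(Suc t) * int (n choose t) * h x (y - int (Suc t)))
       = - (\<Sum>t\<le>n. (-1)^t * int (n choose t) * h x (y - 1 - int t))"
      by (simp add: sum_negf[symmetric] algebra_simps)
    have D0: "(\<Sum>t\<le>Suc n. (-1)^t * int (n choose t) * h x (y - int t))
       = h x y + (\<Sum>t\<le>n. (-1)^(Suc t) * int (n choose Suc t) * h x (y - int (Suc t)))"
      by (subst sum.atMost_Suc_shift) simp
    have D1: "(\<Sum>t\<le>Suc n. (-1)^t * int (n choose t) * h x (y - int t))
       = (\<Sum>t\<le>n. (-1)^t * int (n choose t) * h x (y - int t))"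
      by simp
    show ?thesis using A B C D0 D1 by simp
  qed
  finally show ?case .
qed


lemma zf_Dxp: assumes "per p h" "prime p" "odd p" shows "zf p ((Dx ^^ p) h)"
  unfolding zf_def
proof (intro allI)
  fix x y
  let ?f = "\<lambda>t. (-1)^t * int (p choose t) * h (x - int t) y"
  have p0: "p > 0" using assms(2) prime_gt_0_nat by blast
  have set: "{..p} = insert 0 (insert p {1..<p})" using p0 by auto
  have s: "(\<Sum>t\<le>p. ?f t) = ?f 0 + (?f p + (\<Sum>t\<in>{1..<p}. ?f t))"
    unfolding set using p0 by (simp add: sum.insert)
  have fp: "?f p = - h x y" using assms(1,3) by (simp add: per_def)
  have mid: "int p dvd (\<Sum>t\<in>{1..<p}. ?f t)"
  proof (rule dvd_sum)
    fix t assume "t \<in> {1..<p}"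
    then have "p dvd (p choose t)" using dvd_choose_prime[of t p] assms(2) by auto
    then show "int p dvd ?f t" by (simp add: int_dvd_int_iff)
  qed
  show "int p dvd (Dx ^^ p) h x y" unfolding Dxn_formula s using fp mid by simp
qed

lemma zf_Dyp: assumes "per p h" "prime p" "odd p" shows "zf p ((Dy ^^ p) h)"
  unfolding zf_def
proof (intro allI)
  fix x y
  let ?f = "\<lambda>t. (-1)^t * int (p choose t) * h x (y - int t)"
  have p0: "p > 0" using assms(2) prime_gt_0_nat by blast
  have set: "{..p} = insert 0 (insert p {1..<p})" using p0 by auto
  have s: "(\<Sum>t\<le>p. ?f t) = ?f 0 + (?f p + (\<Sum>t\<in>{1..<p}. ?f t))"
    unfolding set using p0 by (simp add: sum.insert)
  have fp: "?f p = - h x y" using assms(1,3) by (simp add: per_def)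
  have mid: "int p dvd (\<Sum>t\<in>{1..<p}. ?f t)"
  proof (rule dvd_sum)
    fix t assume "t \<in> {1..<p}"
    then have "p dvd (p choose t)" using dvd_choose_prime[of t p] assms(2) by auto
    then show "int p dvd ?f t" by (simp add: int_dvd_int_iff)
  qed
  show "int p dvd (Dy ^^ p) h x y" unfolding Dyn_formula s using fp mid by simp
qed

lemma nil_main:
  assumes "per p h" "prime p" "odd p" "length as + i + j \<ge> 2 * p - 1"
  shows "zf p (DL v as ((Dx ^^ i) ((Dy ^^ j) h)))"
  using assms
proof (induction as arbitrary: h i j)
  case Nil
  then have "i \<ge> p \<or> j \<ge> p" by auto
  then show ?case
  proof
    assume "i \<ge> p"
    then have "(Dx ^^ i) = (Dx ^^ (i - p)) \<circ> (Dx ^^ p)"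
      by (metis funpow_add le_add_diff_inverse2)
    moreover have "zf p ((Dx ^^ p) ((Dy ^^ j) h))"
      by (rule zf_Dxp) (use Nil per_Dyn in auto)
    ultimately show ?thesis by (simp add: zf_Dxn)
  next
    assume "j \<ge> p"
    then have "(Dy ^^ j) = (Dy ^^ (j - p)) \<circ> (Dy ^^ p)"
      by (metis funpow_add le_add_diff_inverse2)
    moreover have "zf p ((Dy ^^ p) ((Dx ^^ i) h))"
      by (rule zf_Dyp) (use Nil per_Dxn in auto)
    ultimately show ?thesis by (simp add: zf_Dyn Dxn_Dyn)
  qed
next
  case (Cons a as)
  obtain a1 b1 where ab: "Dv (v a) h = Dv (int a1, int b1) h"
    using Dv_per[OF Cons.prems(1)] Cons.prems(2) prime_gt_0_nat by blast
  have Dyn_Dx: "(Dy ^^ j) (Dx f) = Dx ((Dy ^^ j) f)" for f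
    using Dxn_Dyn[of 1 j f] by simp
  have Dxn_Dx: "(Dx ^^ i) (Dx f) = (Dx ^^ Suc i) f" for f
    by (simp add: funpow_swap1)
  have Dyn_Dy: "(Dy ^^ j) (Dy f) = (Dy ^^ Suc j) f" for f
    by (simp add: funpow_swap1)
  have "Dv (v a) ((Dx ^^ i) ((Dy ^^ j) h)) = (Dx ^^ i) ((Dy ^^ j) (Dv (v a) h))"
    by (simp add: Dxn_Dv Dyn_Dv)
  also have "\<dots> = (Dx ^^ i) ((Dy ^^ j) (addf (Dx (Ax a1 h)) (Dy (By a1 b1 h))))"
    by (simp add: ab Dv_decomp)
  also have "\<dots> = addf ((Dx ^^ i) ((Dy ^^ j) (Dx (Ax a1 h)))) ((Dx ^^ i) ((Dy ^^ j) (Dy (By a1 b1 h))))"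
    by (simp add: Dxn_add Dyn_add)
  also have "\<dots> = addf ((Dx ^^ Suc i) ((Dy ^^ j) (Ax a1 h))) ((Dx ^^ i) ((Dy ^^ Suc j) (By a1 b1 h)))"
    by (simp only: Dyn_Dx Dxn_Dx Dyn_Dy)
  finally have e: "Dv (v a) ((Dx ^^ i) ((Dy ^^ j) h)) =
     addf ((Dx ^^ Suc i) ((Dy ^^ j) (Ax a1 h))) ((Dx ^^ i) ((Dy ^^ Suc j) (By a1 b1 h)))" .
  have 1: "zf p (DL v as ((Dx ^^ Suc i) ((Dy ^^ j) (Ax a1 h))))"
    using Cons.IH[of "Ax a1 h" "Suc i" j] Cons.prems per_Ax by auto
  have 2: "zf p (DL v as ((Dx ^^ i) ((Dy ^^ Suc j) (By a1 b1 h))))"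
    using Cons.IH[of "By a1 b1 h" i "Suc j"] Cons.prems per_By by auto
  show ?case using 1 2 by (simp add: e DL_add zf_add)
qed


lemma sum_list_zero: "(\<forall>x\<in>set xs. f x = 0) \<Longrightarrow> sum_list (map f xs) = (0::'a::monoid_add)"
  by (induction xs) auto
lemma sum_list_neg: "sum_list (map (\<lambda>x. - f x) xs) = - sum_list (map f xs :: int list)"
  by (induction xs) auto

lemma DL_formula:
  "DL v as f x y = (\<Sum>l \<leftarrow> subseqs as. (-1)^length l *
      f (x - sum_list (map (fst \<circ> v) l)) (y - sum_list (map (snd \<circ> v) l)))"
proof (induction as arbitrary: f x y)
  case Nil then show ?case by simp
next
  case (Cons a as)
  show ?case
    by (simp add: Cons.IH Let_def Dv_def sum_list_subtractf sum_list_neg algebra_simps o_def)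
qed

lemma sum_subseqs_nil:
  "(\<forall>l\<in>set (subseqs as). l \<noteq> [] \<longrightarrow> F l = 0) \<Longrightarrow> sum_list (map F (subseqs as)) = F []"
proof (induction as)
  case Nil then show ?case by simp
next
  case (Cons a as)
  have z: "sum_list (map F (map (Cons a) (subseqs as))) = 0"
    unfolding map_map by (rule sum_list_zero) (use Cons.prems in \<open>auto simp: Let_def\<close>)
  have "sum_list (map F (subseqs as)) = F []"
    using Cons.prems by (intro Cons.IH) (auto simp: Let_def)
  then show ?case using z by (simp add: Let_def)
qed

theorem davenport_cp2:
  fixes v :: "'x \<Rightarrow> int \<times> int"
  assumes "prime p" "odd p" "length as \<ge> 2 * p - 1"
  shows "\<exists>l \<in> set (subseqs as). l \<noteq> [] \<and> int p dvd sum_list (map (fst \<circ> v) l)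
            \<and> int p dvd sum_list (map (snd \<circ> v) l)"
proof (rule ccontr)
  assume H: "\<not> ?thesis"
  define \<delta> :: ifun where "\<delta> = (\<lambda>x y. if int p dvd x \<and> int p dvd y then 1 else 0)"
  have per: "per p \<delta>" unfolding per_def \<delta>_def
    by (simp add: dvd_diff_commute) (metis dvd_diff dvd_refl diff_add_cancel dvd_add)
  have "zf p (DL v as ((Dx ^^ 0) ((Dy ^^ 0) \<delta>)))"
    by (rule nil_main) (use assms per in auto)
  then have "int p dvd DL v as \<delta> 0 0" by (simp add: zf_def)
  also have "DL v as \<delta> 0 0 = 1"
  proof -
    have "DL v as \<delta> 0 0 = (\<Sum>l \<leftarrow> subseqs as. (-1)^length l *
      \<delta> (0 - sum_list (map (fst \<circ> v) l)) (0 - sum_list (map (snd \<circ> v) l)))"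
      by (rule DL_formula)
    also have "\<dots> = (-1)^length ([]::'x list) * \<delta> (0 - sum_list (map (fst \<circ> v) [])) (0 - sum_list (map (snd \<circ> v) []))"
      by (rule sum_subseqs_nil[of as "\<lambda>l. (-1)^length l *
      \<delta> (0 - sum_list (map (fst \<circ> v) l)) (0 - sum_list (map (snd \<circ> v) l))"]) (use H in \<open>auto simp: \<delta>_def\<close>)
    also have "\<dots> = 1" by (simp add: \<delta>_def)
    finally show ?thesis .
  qed
  finally have "int p dvd 1" .
  then show False using assms(1) by (simp add: prime_gt_1_nat)
qed



lemma fermat_own:
  assumes "prime p" shows "((a::nat) ^ p) mod p = a mod p"
proof (induction a)
  case 0
  have "p > 0" using assms prime_gt_0_nat by blast
  then show ?case by (simp add: zero_power)
next
  case (Suc a)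
  have p0: "p > 0" using assms prime_gt_0_nat by blast
  let ?f = "\<lambda>k. (p choose k) * a ^ k * 1 ^ (p - k)"
  have set: "{..p} = insert 0 (insert p {1..<p})" using p0 by auto
  have "(a + 1) ^ p = (\<Sum>k\<le>p. ?f k)" using binomial_ring[of a 1 p] by simp
  also have "\<dots> = ?f 0 + (?f p + (\<Sum>k\<in>{1..<p}. ?f k))"
    unfolding set using p0 by (simp add: sum.insert)
  finally have e: "(a + 1) ^ p = 1 + (a ^ p + (\<Sum>k\<in>{1..<p}. ?f k))" using p0 by simp
  have "p dvd (\<Sum>k\<in>{1..<p}. ?f k)"
    by (rule dvd_sum) (use dvd_choose_prime assms in auto)
  then obtain c where c: "(\<Sum>k\<in>{1..<p}. ?f k) = p * c" by blast
  have "(a + 1) ^ p mod p = (1 + a ^ p + p * c) mod p" unfolding e c by (simp add: add.assoc)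
  also have "\<dots> = (1 + a ^ p) mod p" by simp
  also have "\<dots> = (1 + a) mod p"
    using mod_add_right_eq[of 1 "a^p" p] mod_add_right_eq[of 1 a p] Suc.IH by simp
  finally show ?case by simp
qed


lemma funpow_period:
  assumes "(f ^^ d) a = a" shows "(f ^^ (d * k)) a = a"
proof (induction k)
  case 0 then show ?case by simp
next
  case (Suc k)
  have "(f ^^ (d * Suc k)) a = (f ^^ d) ((f ^^ (d * k)) a)" by (simp add: funpow_add)
  then show ?case using Suc assms by simp
qed

lemma funpow_mod:
  assumes "(f ^^ p) a = a" shows "(f ^^ n) a = (f ^^ (n mod p)) a"
proof -
  have "(f ^^ n) a = (f ^^ (n mod p)) ((f ^^ (p * (n div p))) a)"
    by (metis funpow_add comp_apply mod_div_mult_eq add.commute mult.commute)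
  then show ?thesis using funpow_period[OF assms] by simp
qed

lemma funpow_fix: "f a = a \<Longrightarrow> (f ^^ n) a = a"
  by (induction n) auto

lemma period_fix:
  assumes pr: "prime p" and ap: "(f ^^ p) a = a" and ad: "(f ^^ d) a = a" and d: "0 < d" "d < p"
  shows "f a = a"
proof -
  have "\<not> p dvd d" using d by (simp add: nat_dvd_not_less)
  then have "coprime d p" using prime_imp_coprime[OF pr] by (simp add: coprime_commute)
  then have "gcd d p = 1" by simp
  then obtain e y where e: "d * e = p * y + 1" using bezout_nat[of d p] d by auto
  have "a = (f ^^ (d * e)) a" using funpow_period[OF ad] by simp
  also have "\<dots> = f ((f ^^ (p * y)) a)" unfolding e by simp
  also have "\<dots> = f a" using funpow_period[OF ap] by simp
  finally show ?thesis by simp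
qed

lemma fix_mod:
  assumes "finite A" "prime p" "\<And>a. a \<in> A \<Longrightarrow> f a \<in> A" "\<And>a. a \<in> A \<Longrightarrow> (f ^^ p) a = a"
  shows "card {a\<in>A. f a = a} mod p = card A mod p"
  using assms
proof (induction "card A" arbitrary: A rule: less_induct)
  case less
  show ?case
  proof (cases "\<forall>a\<in>A. f a = a")
    case True
    then have "{a\<in>A. f a = a} = A" by auto
    then show ?thesis by simp
  next
    case False
    then obtain a where a: "a \<in> A" "f a \<noteq> a" by blast
    have p0: "p > 0" using less.prems(2) prime_gt_0_nat by blast
    have ap: "(f ^^ p) a = a" using less.prems(4) a by simp
    have inA: "(f ^^ k) a \<in> A" for k by (induction k) (use a less.prems(3) in auto)
    define Orb where "Orb = (\<lambda>k. (f ^^ k) a) ` {..<p}"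
    have OA: "Orb \<subseteq> A" using inA Orb_def by auto
    have nofix: "f ((f ^^ k) a) \<noteq> (f ^^ k) a" if kp: "k < p" for k
    proof
      assume fk: "f ((f ^^ k) a) = (f ^^ k) a"
      have "(f ^^ (p - k)) ((f ^^ k) a) = (f ^^ p) a"
        using kp by (metis funpow_add comp_apply le_add_diff_inverse2 less_imp_le)
      then have "(f ^^ k) a = a" using funpow_fix[of f "(f ^^ k) a" "p - k", OF fk] ap by simp
      then show False using fk a by simp
    qed
    have inj: "inj_on (\<lambda>k. (f ^^ k) a) {..<p}"
    proof -
      have key: "i = j" if ij: "i \<le> j" "j < p" and e: "(f ^^ i) a = (f ^^ j) a" for i j
      proof (rule ccontr)
        assume "i \<noteq> j"
        let ?b = "(f ^^ i) a"
        have bp: "(f ^^ p) ?b = ?b" by (metis ap funpow_add comp_apply add.commute)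
        have "(f ^^ (j - i)) ?b = (f ^^ j) a" using ij by (metis funpow_add comp_apply le_add_diff_inverse2)
        then have bd: "(f ^^ (j - i)) ?b = ?b" using e by simp
        have "f ?b = ?b" by (rule period_fix[OF less.prems(2) bp bd]) (use ij \<open>i \<noteq> j\<close> in auto)
        then show False using nofix ij by auto
      qed
      show ?thesis by (rule inj_onI) (metis key lessThan_iff linorder_le_cases)
    qed
    have cO: "card Orb = p" using card_image[OF inj] Orb_def by simp
    have closed: "f b \<in> A - Orb" if b: "b \<in> A - Orb" for b
    proof -
      have "f b \<notin> Orb"
      proof
        assume "f b \<in> Orb"
        then obtain k where k: "f b = (f ^^ k) a" using Orb_def by auto
        have "b = (f ^^ p) b" using less.prems(4) b by simp
        also have "\<dots> = (f ^^ (p - 1)) (f b)" using p0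
          by (metis Suc_diff_1 funpow_Suc_right comp_apply)
        also have "\<dots> = (f ^^ (p - 1 + k)) a" unfolding k by (simp add: funpow_add)
        also have "\<dots> = (f ^^ ((p - 1 + k) mod p)) a" by (rule funpow_mod[OF ap])
        finally have "b \<in> Orb" unfolding Orb_def using p0 by auto
        then show False using b by simp
      qed
      then show ?thesis using less.prems(3) b by simp
    qed
    have fixeq: "{x\<in>A. f x = x} = {x\<in>A - Orb. f x = x}"
      using nofix Orb_def by auto
    have lt: "card (A - Orb) < card A"
      using card_Diff_subset[OF finite_subset[OF OA less.prems(1)] OA] cO p0 card_mono[OF less.prems(1) OA] by simp
    have IH: "card {x\<in>A - Orb. f x = x} mod p = card (A - Orb) mod p"
      by (rule less.hyps[OF lt]) (use less.prems closed in auto)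
    have "card A = card (A - Orb) + p"
      using card_Diff_subset[OF finite_subset[OF OA less.prems(1)] OA] cO card_mono[OF less.prems(1) OA] by simp
    then show ?thesis using IH fixeq by simp
  qed
qed

locale hgrp = group G for G :: "('a, 'b) monoid_scheme" (structure) +
  fixes p :: nat
  assumes pp: "prime p" and fin: "finite (carrier G)" and cardG: "card (carrier G) = p ^ 3"
    and expo: "\<And>x. x \<in> carrier G \<Longrightarrow> x [^] p = \<one>"
    and nonab: "\<exists>x\<in>carrier G. \<exists>y\<in>carrier G. x \<otimes> y \<noteq> y \<otimes> x"
begin

abbreviation Z where "Z \<equiv> grp_center G"
definition cent where "cent x = {g \<in> carrier G. g \<otimes> x = x \<otimes> g}"
definition comm where "comm a b = a \<otimes> b \<otimes> inv a \<otimes> inv b"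

lemma p_gt1: "p > 1" using pp prime_gt_1_nat by blast

lemma Z_sub: "Z \<subseteq> carrier G" by (auto simp: grp_center_def)
lemma Z_car: "z \<in> Z \<Longrightarrow> z \<in> carrier G" by (auto simp: grp_center_def)
lemma Z_comm: "z \<in> Z \<Longrightarrow> g \<in> carrier G \<Longrightarrow> z \<otimes> g = g \<otimes> z" by (auto simp: grp_center_def)
lemma Z_I: "z \<in> carrier G \<Longrightarrow> (\<And>g. g \<in> carrier G \<Longrightarrow> z \<otimes> g = g \<otimes> z) \<Longrightarrow> z \<in> Z"
  by (auto simp: grp_center_def)

lemma Z_one: "\<one> \<in> Z" by (rule Z_I) auto

lemma Z_mult: "a \<in> Z \<Longrightarrow> b \<in> Z \<Longrightarrow> a \<otimes> b \<in> Z"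
proof (rule Z_I)
  assume a: "a \<in> Z" and b: "b \<in> Z"
  show "a \<otimes> b \<in> carrier G" using a b Z_car by auto
  fix g assume g: "g \<in> carrier G"
  have "a \<otimes> b \<otimes> g = a \<otimes> (g \<otimes> b)" using a b g Z_car Z_comm by (simp add: m_assoc)
  also have "\<dots> = g \<otimes> a \<otimes> b" using a b g Z_car Z_comm by (simp add: m_assoc[symmetric])
  finally show "a \<otimes> b \<otimes> g = g \<otimes> (a \<otimes> b)" using a b g Z_car by (simp add: m_assoc)
qed

lemma Z_inv: "a \<in> Z \<Longrightarrow> inv a \<in> Z"
proof (rule Z_I)
  assume a: "a \<in> Z"
  show "inv a \<in> carrier G" using a Z_car by auto
  fix g assume g: "g \<in> carrier G"
  have ac: "a \<in> carrier G" using a Z_car by auto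
  have "a \<otimes> g = g \<otimes> a" using a g Z_comm by auto
  then have "g = inv a \<otimes> (g \<otimes> a)" using ac g by (simp add: inv_solve_left)
  then have "g \<otimes> inv a = inv a \<otimes> g \<otimes> a \<otimes> inv a" using ac g by (simp add: m_assoc)
  also have "\<dots> = inv a \<otimes> g" using ac g by (simp add: m_assoc)
  finally show "inv a \<otimes> g = g \<otimes> inv a" by simp
qed

lemma Z_subgroup: "subgroup Z G"
  by (rule subgroupI) (use Z_sub Z_one Z_inv Z_mult in auto)

lemma sub_pow: "subgroup H G \<Longrightarrow> x \<in> H \<Longrightarrow> x [^] (n::nat) \<in> H"
  by (induction n) (auto simp: subgroup.one_closed subgroup.m_closed)

lemma Z_pow: "x \<in> Z \<Longrightarrow> x [^] (n::nat) \<in> Z"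
  using sub_pow[OF Z_subgroup] .

lemma pow_mod: "x \<in> carrier G \<Longrightarrow> x [^] n = x [^] (n mod p)"
proof -
  assume x: "x \<in> carrier G"
  have "x [^] n = x [^] (p * (n div p) + n mod p)" by simp
  also have "\<dots> = x [^] (p * (n div p)) \<otimes> x [^] (n mod p)"
    using x by (simp add: nat_pow_mult)
  also have "\<dots> = (x [^] p) [^] (n div p) \<otimes> x [^] (n mod p)"
    using x by (simp add: nat_pow_pow)
  finally show ?thesis using x expo by simp
qed

lemma pow_coprime_mem:
  assumes H: "subgroup H G" and x: "x \<in> carrier G" and xd: "x [^] d \<in> H" and nd: "\<not> p dvd d"
  shows "x \<in> H"
proof -
  have d0: "d \<noteq> 0" using nd by (cases d) auto
  have "coprime d p" using prime_imp_coprime[OF pp nd] by (simp add: coprime_commute)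
  then have "gcd d p = 1" by simp
  then obtain e y where e: "d * e = p * y + 1" using bezout_nat[OF d0, of p] by auto
  have "(d * e) mod p = 1" unfolding e using p_gt1 mod_mult_self4[of p y 1] by simp
  then have "x = x [^] (d * e)" using pow_mod[OF x, of "d*e"] x by simp
  also have "\<dots> = (x [^] d) [^] e" using x by (simp add: nat_pow_pow)
  finally show ?thesis using sub_pow[OF H xd, of e] by simp
qed

lemma comm_Z_iff: "a \<in> carrier G \<Longrightarrow> b \<in> carrier G \<Longrightarrow> comm a b = \<one> \<longleftrightarrow> a \<otimes> b = b \<otimes> a"
proof -
  assume a: "a \<in> carrier G" and b: "b \<in> carrier G"
  have "comm a b = \<one> \<longleftrightarrow> a \<otimes> b \<otimes> inv a = \<one> \<otimes> b"
    unfolding comm_def using inv_solve_right'[of \<one> "a \<otimes> b \<otimes> inv a" b] a b by simp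
  also have "\<dots> \<longleftrightarrow> a \<otimes> b = b \<otimes> a" using inv_solve_right'[of b "a \<otimes> b" a] a b by simp
  finally show ?thesis .
qed


definition phi where "phi = (\<lambda>g. \<lambda>h\<in>carrier G. g \<otimes> h \<otimes> inv g)"

lemma act: "group_action G (carrier G) phi"
  unfolding phi_def by (rule action_by_conjugation)

lemma orbit_eq: "x \<in> carrier G \<Longrightarrow> orbit G phi x = {g \<otimes> x \<otimes> inv g | g. g \<in> carrier G}"
  unfolding orbit_def phi_def by auto

lemma conj_eq_iff: "g \<in> carrier G \<Longrightarrow> x \<in> carrier G \<Longrightarrow> g \<otimes> x \<otimes> inv g = x \<longleftrightarrow> g \<otimes> x = x \<otimes> g"
  using inv_solve_right'[of x "g \<otimes> x" g] by simp

lemma stab_eq: "x \<in> carrier G \<Longrightarrow> stabilizer G phi x = cent x"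
  unfolding stabilizer_def phi_def cent_def using conj_eq_iff by auto

lemma cent_subgroup: "x \<in> carrier G \<Longrightarrow> subgroup (cent x) G"
  using group_action.stabilizer_subgroup[OF act] stab_eq by metis

lemma orbit_stab: "x \<in> carrier G \<Longrightarrow> card (orbit G phi x) * card (cent x) = p ^ 3"
  using group_action.orbit_stabilizer_theorem[OF act] stab_eq cardG unfolding order_def by metis

lemma conj_Z: "g \<in> carrier G \<Longrightarrow> x \<in> Z \<Longrightarrow> g \<otimes> x \<otimes> inv g = x"
  using conj_eq_iff Z_comm Z_car by metis

lemma conj_in_Z: "g \<in> carrier G \<Longrightarrow> x \<in> carrier G \<Longrightarrow> g \<otimes> x \<otimes> inv g \<in> Z \<Longrightarrow> x \<in> Z"
proof -
  assume g: "g \<in> carrier G" and x: "x \<in> carrier G" and y: "g \<otimes> x \<otimes> inv g \<in> Z"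
  have "inv g \<otimes> (g \<otimes> x \<otimes> inv g) \<otimes> inv (inv g) = g \<otimes> x \<otimes> inv g"
    using conj_Z[OF _ y, of "inv g"] g by simp
  moreover have "inv g \<otimes> (g \<otimes> x \<otimes> inv g) \<otimes> inv (inv g) = x"
    using g x by (simp add: m_assoc, simp add: m_assoc[symmetric])
  ultimately show ?thesis using y by simp
qed

lemma p_dvd_Z: "p dvd card Z"
proof -
  define f :: "'a \<Rightarrow> nat" where "f x = (if x \<in> Z then 0 else 1)" for x
  have sum: "(\<Sum>orb\<in>orbits G (carrier G) phi. \<Sum>x\<in>orb. f x) = (\<Sum>x\<in>carrier G. f x)"
    using group_action.disjoint_sum[OF act fin] by blast
  have rhs: "(\<Sum>x\<in>carrier G. f x) = card (carrier G - Z)"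
    unfolding f_def using fin by (simp add: sum.If_cases Diff_eq)
  have each: "p dvd (\<Sum>x\<in>orb. f x)" if orb: "orb \<in> orbits G (carrier G) phi" for orb
  proof -
    obtain x0 where x0: "x0 \<in> carrier G" "orb = orbit G phi x0"
      using orb unfolding orbits_def by auto
    show ?thesis
    proof (cases "x0 \<in> Z")
      case True
      then have "orb = {x0}" using x0 orbit_eq conj_Z by (auto intro!: exI[of _ \<one>])
      then show ?thesis using True f_def by simp
    next
      case False
      have nz: "\<forall>y\<in>orb. y \<notin> Z" using x0 orbit_eq conj_in_Z False by auto
      then have "(\<Sum>x\<in>orb. f x) = card orb" unfolding f_def by simp
      moreover have "card orb dvd p ^ 3" using orbit_stab[OF x0(1)] x0(2) by (metis dvd_triv_left)
      then obtain i where i: "i \<le> 3" "card orb = p ^ i" using divides_primepow_nat[OF pp] by auto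
      moreover have "i \<noteq> 0"
      proof
        assume "i = 0"
        then have c1: "card orb = 1" using i by simp
        have x0o: "x0 \<in> orb" using x0 orbit_eq[OF x0(1)] by (auto intro!: exI[of _ \<one>])
        have "orb = {x0}" using c1 x0o by (metis card_1_singletonE singletonD)
        then have "\<forall>g\<in>carrier G. g \<otimes> x0 \<otimes> inv g = x0" using x0 orbit_eq by auto
        then have "x0 \<in> Z" using x0(1) conj_eq_iff by (auto intro!: Z_I)
        then show False using False by simp
      qed
      ultimately show ?thesis by simp
    qed
  qed
  have "p dvd card (carrier G - Z)" using sum rhs each dvd_sum by metis
  then have "p dvd p ^ 3 - card Z" using card_Diff_subset[OF finite_subset[OF Z_sub fin] Z_sub] cardG by simp
  moreover have "card Z \<le> p ^ 3" using card_mono[OF fin Z_sub] cardG by simp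
  ultimately show ?thesis using dvd_diffD1 by (metis dvd_power dvd_refl zero_less_numeral)
qed


lemma noncentral_ex: "\<exists>x\<in>carrier G. x \<notin> Z"
  using nonab Z_comm by metis

lemma cent_props: "x \<in> carrier G \<Longrightarrow> Z \<subseteq> cent x \<and> x \<in> cent x"
  unfolding cent_def using Z_comm Z_car by auto

lemma cent_ne: "x \<in> carrier G \<Longrightarrow> x \<notin> Z \<Longrightarrow> cent x \<noteq> carrier G"
proof
  assume x: "x \<in> carrier G" "x \<notin> Z" and e: "cent x = carrier G"
  have "x \<in> Z"
  proof (rule Z_I)
    show "x \<in> carrier G" using x by simp
    fix g assume g: "g \<in> carrier G"
    then have "g \<in> cent x" using e by simp
    then show "x \<otimes> g = g \<otimes> x" unfolding cent_def by simp
  qed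
  then show False using x by simp
qed

lemma card_pow: "subgroup H G \<Longrightarrow> \<exists>i\<le>3. card H = p ^ i"
proof -
  assume H: "subgroup H G"
  have "card H dvd p ^ 3" using lagrange[OF H] cardG unfolding order_def by (metis dvd_triv_right)
  then show ?thesis using divides_primepow_nat[OF pp] by auto
qed

lemma card_facts: "card Z = p \<and> (\<forall>x\<in>carrier G. x \<notin> Z \<longrightarrow> card (cent x) = p ^ 2)"
proof -
  obtain a where a: "a \<le> 3" "card Z = p ^ a" using card_pow[OF Z_subgroup] by blast
  have a1: "a \<ge> 1"
  proof (rule ccontr)
    assume "\<not> a \<ge> 1" then have "card Z = 1" using a by simp
    then show False using p_dvd_Z p_gt1 by simp
  qed
  have main: "a = 1 \<and> card (cent x) = p ^ 2" if x: "x \<in> carrier G" "x \<notin> Z" for x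
  proof -
    obtain b where b: "b \<le> 3" "card (cent x) = p ^ b" using card_pow[OF cent_subgroup[OF x(1)]] by blast
    have finc: "finite (cent x)" using fin by (simp add: cent_def)
    have "Z \<subset> cent x" using cent_props[OF x(1)] x(2) by auto
    then have "card Z < card (cent x)" using psubset_card_mono finc by blast
    then have ab: "a < b" using a b p_gt1 by simp
    have "cent x \<subset> carrier G" using cent_ne[OF x] cent_def by auto
    then have "card (cent x) < p ^ 3" using psubset_card_mono fin cardG by metis
    then have "b < 3" using b p_gt1 by simp
    then have "b = 2" using ab a1 by linarith
    then show ?thesis using ab a1 b by simp
  qed
  obtain x0 where "x0 \<in> carrier G" "x0 \<notin> Z" using noncentral_ex by blast
  then have "a = 1" using main by blast
  then show ?thesis using a main by auto
qed

lemma card_Z: "card Z = p" using card_facts by blast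
lemma card_cent: "x \<in> carrier G \<Longrightarrow> x \<notin> Z \<Longrightarrow> card (cent x) = p ^ 2" using card_facts by blast
lemma card_orbit: "x \<in> carrier G \<Longrightarrow> x \<notin> Z \<Longrightarrow> card (orbit G phi x) = p"
proof -
  assume x: "x \<in> carrier G" "x \<notin> Z"
  have "card (orbit G phi x) * p ^ 2 = p * p ^ 2" using orbit_stab[OF x(1)] card_cent[OF x]
    by (simp add: power_eq_if)
  then show ?thesis using p_gt1 by simp
qed

lemma pow_Z_eq:
  assumes x: "x \<in> carrier G" "x \<notin> Z" and ij: "i \<le> j" "j < p" and z: "z \<in> Z" "z' \<in> Z"
    and e: "x [^] i \<otimes> z = x [^] j \<otimes> z'"
  shows "i = j \<and> z = z'"
proof -
  have zc: "z \<in> carrier G" "z' \<in> carrier G" using z Z_car by auto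
  have "x [^] j = x [^] i \<otimes> x [^] (j - i)" using x ij by (simp add: nat_pow_mult)
  then have "x [^] i \<otimes> z = x [^] i \<otimes> (x [^] (j - i) \<otimes> z')" using e x zc by (simp add: m_assoc)
  then have e2: "z = x [^] (j - i) \<otimes> z'" using x zc by simp
  then have "x [^] (j - i) = z \<otimes> inv z'" using x zc by (simp add: inv_solve_right)
  then have xz: "x [^] (j - i) \<in> Z" using z Z_mult Z_inv by simp
  have "i = j"
  proof (rule ccontr)
    assume "i \<noteq> j"
    then have "\<not> p dvd (j - i)" using ij by (metis diff_less_Suc le_Suc_eq less_imp_diff_less nat_dvd_not_less not_less_eq zero_less_diff le_neq_implies_less)
    then have "x \<in> Z" using pow_coprime_mem[OF Z_subgroup x(1) xz] by simp
    then show False using x by simp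
  qed
  then show ?thesis using e2 zc by simp
qed

lemma cent_eq:
  assumes x: "x \<in> carrier G" "x \<notin> Z"
  shows "cent x = {x [^] i \<otimes> z | i z. i < p \<and> z \<in> Z}"
proof -
  define F where "F = (\<lambda>(i::nat, z). x [^] i \<otimes> z)"
  have img: "{x [^] i \<otimes> z | i z. i < p \<and> z \<in> Z} = F ` ({..<p} \<times> Z)"
    unfolding F_def by auto
  have inj: "inj_on F ({..<p} \<times> Z)"
  proof (rule inj_onI)
    fix u v assume u: "u \<in> {..<p} \<times> Z" and v: "v \<in> {..<p} \<times> Z" and e: "F u = F v"
    obtain i z where u': "u = (i, z)" "i < p" "z \<in> Z" using u by auto
    obtain j z' where v': "v = (j, z')" "j < p" "z' \<in> Z" using v by auto
    have e': "x [^] i \<otimes> z = x [^] j \<otimes> z'" using e u' v' F_def by simp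
    show "u = v"
    proof (cases "i \<le> j")
      case True then show ?thesis using pow_Z_eq[OF x True v'(2) u'(3) v'(3) e'] u' v' by simp
    next
      case False then show ?thesis using pow_Z_eq[OF x _ u'(2) v'(3) u'(3) e'[symmetric]] u' v' by simp
    qed
  qed
  have cardH: "card (F ` ({..<p} \<times> Z)) = p ^ 2"
    using card_image[OF inj] card_Z by (simp add: card_cartesian_product power2_eq_square)
  have sub: "F ` ({..<p} \<times> Z) \<subseteq> cent x"
  proof
    fix w assume "w \<in> F ` ({..<p} \<times> Z)"
    then obtain u where u: "u \<in> {..<p} \<times> Z" "w = F u" by blast
    obtain i z where iz: "u = (i, z)" by (cases u)
    then have w: "w = x [^] i \<otimes> z" "z \<in> Z" using u unfolding F_def by auto
    have zc: "z \<in> carrier G" using w Z_car by auto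
    have "w \<otimes> x = x [^] i \<otimes> (x \<otimes> z)" using w x zc Z_comm by (simp add: m_assoc)
    also have "\<dots> = x [^] i \<otimes> x \<otimes> z" using x zc by (simp add: m_assoc)
    also have "\<dots> = x \<otimes> x [^] i \<otimes> z" using x nat_pow_comm[of x i 1] by simp
    finally show "w \<in> cent x" unfolding cent_def using w x zc by (simp add: m_assoc)
  qed
  have finc: "finite (cent x)" using fin by (simp add: cent_def)
  have "F ` ({..<p} \<times> Z) = cent x"
    using card_subset_eq[OF finc sub] cardH card_cent[OF x] by simp
  then show ?thesis using img by simp
qed

lemma Z_powers:
  assumes s: "s \<in> Z" "s \<noteq> \<one>"
  shows "Z = {s [^] i | i. i < p}"
proof -
  have sc: "s \<in> carrier G" using s Z_car by auto
  have inj: "inj_on (\<lambda>i. s [^] i) {..<p}"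
  proof (rule inj_onI)
    have key: "i = j" if ij: "i \<le> j" "j < p" and e: "s [^] i = s [^] j" for i j
    proof (rule ccontr)
      assume "i \<noteq> j"
      then have nd: "\<not> p dvd (j - i)" using ij by (metis diff_less_Suc le_Suc_eq less_imp_diff_less nat_dvd_not_less not_less_eq zero_less_diff le_neq_implies_less)
      have "s [^] i \<otimes> s [^] (j - i) = s [^] j" using nat_pow_mult[of s i "j-i"] ij sc by simp
      then have "s [^] i \<otimes> s [^] (j - i) = s [^] i \<otimes> \<one>" using e sc by simp
      then have "s [^] (j - i) \<in> {\<one>}" using sc by simp
      then have "s \<in> {\<one>}" using pow_coprime_mem[OF triv_subgroup sc _ nd] by simp
      then show False using s by simp
    qed
    fix i j assume "i \<in> {..<p}" "j \<in> {..<p}" "s [^] i = s [^] j"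
    then show "i = j" using key by (metis lessThan_iff linorder_le_cases)
  qed
  have sub: "{s [^] i | i. i < p} \<subseteq> Z" using Z_pow s by auto
  have im: "{s [^] i | i. i < p} = (\<lambda>i. s [^] i) ` {..<p}" by auto
  have "card {s [^] i | i. i < p} = p" using card_image[OF inj] im by simp
  then show ?thesis using card_subset_eq[OF finite_subset[OF Z_sub fin] sub] card_Z by simp
qed


lemma cancel_l [simp]: "x \<in> carrier G \<Longrightarrow> y \<in> carrier G \<Longrightarrow> inv x \<otimes> (x \<otimes> y) = y"
  by (simp add: m_assoc[symmetric])
lemma cancel_l2 [simp]: "x \<in> carrier G \<Longrightarrow> y \<in> carrier G \<Longrightarrow> x \<otimes> (inv x \<otimes> y) = y"
  by (simp add: m_assoc[symmetric])

lemma conj_pow: "g \<in> carrier G \<Longrightarrow> x \<in> carrier G \<Longrightarrow> g \<otimes> x [^] (n::nat) \<otimes> inv g = (g \<otimes> x \<otimes> inv g) [^] n"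
proof (induction n)
  case 0 then show ?case by simp
next
  case (Suc n)
  have "g \<otimes> x [^] Suc n \<otimes> inv g = (g \<otimes> x [^] n \<otimes> inv g) \<otimes> (g \<otimes> x \<otimes> inv g)"
    using Suc.prems by (simp add: m_assoc)
  then show ?case using Suc by simp
qed

lemma conj_iter: "x \<in> carrier G \<Longrightarrow> y \<in> carrier G \<Longrightarrow>
  ((\<lambda>y. x \<otimes> y \<otimes> inv x) ^^ n) y = x [^] n \<otimes> y \<otimes> inv (x [^] n)"
proof (induction n)
  case 0 then show ?case by simp
next
  case (Suc n)
  have "x [^] Suc n = x \<otimes> x [^] n" using Suc.prems nat_pow_Suc2 by blast
  then have "x [^] Suc n \<otimes> y \<otimes> inv (x [^] Suc n) = x \<otimes> (x [^] n \<otimes> y \<otimes> inv (x [^] n)) \<otimes> inv x"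
    using Suc.prems by (simp add: m_assoc inv_mult_group)
  then show ?case using Suc by simp
qed

lemma orbit_in_cent:
  assumes x: "x \<in> carrier G" "x \<notin> Z" and h: "h \<in> carrier G"
  shows "h \<otimes> x \<otimes> inv h \<in> cent x"
proof -
  let ?A = "orbit G phi x"
  let ?f = "\<lambda>y. x \<otimes> y \<otimes> inv x"
  have A: "?A = {g \<otimes> x \<otimes> inv g | g. g \<in> carrier G}" using orbit_eq[OF x(1)] .
  have finA: "finite ?A" using A fin by (auto intro: finite_subset[OF _ fin])
  have Acar: "?A \<subseteq> carrier G" using A x by auto
  have fA: "?f y \<in> ?A" if y: "y \<in> ?A" for y
  proof -
    obtain g where g: "g \<in> carrier G" "y = g \<otimes> x \<otimes> inv g" using y A by auto
    have 1: "?f y = x \<otimes> (g \<otimes> (x \<otimes> (inv g \<otimes> inv x)))" using g x by (simp add: m_assoc)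
    have 2: "(x \<otimes> g) \<otimes> x \<otimes> inv (x \<otimes> g) = x \<otimes> (g \<otimes> (x \<otimes> (inv g \<otimes> inv x)))"
      using g x by (simp add: m_assoc inv_mult_group)
    have "?f y = (x \<otimes> g) \<otimes> x \<otimes> inv (x \<otimes> g)" using 1 2 by simp
    then show ?thesis using A g x by auto
  qed
  have fp: "(?f ^^ p) y = y" if y: "y \<in> ?A" for y
    using conj_iter[OF x(1), of y p] y Acar expo[OF x(1)] by auto
  have fm: "card {y\<in>?A. ?f y = y} mod p = card ?A mod p"
    by (rule fix_mod[OF finA pp]) (use fA fp in auto)
  have cA: "card ?A = p" using card_orbit[OF x] .
  have xin: "x \<in> {y\<in>?A. ?f y = y}" using A x by (auto simp: m_assoc intro!: exI[of _ \<one>])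
  have fsub: "{y\<in>?A. ?f y = y} \<subseteq> ?A" by auto
  have "card {y\<in>?A. ?f y = y} > 0" using xin finA by (auto simp: card_gt_0_iff)
  moreover have "card {y\<in>?A. ?f y = y} \<le> p" using card_mono[OF finA fsub] cA by simp
  moreover have "card {y\<in>?A. ?f y = y} mod p = 0" using fm cA by simp
  ultimately have "card {y\<in>?A. ?f y = y} = p" by (metis mod_less le_neq_implies_less less_not_refl2)
  then have "{y\<in>?A. ?f y = y} = ?A" using card_subset_eq[OF finA fsub] cA by simp
  moreover have "h \<otimes> x \<otimes> inv h \<in> ?A" using A h by auto
  ultimately have "x \<otimes> (h \<otimes> x \<otimes> inv h) \<otimes> inv x = h \<otimes> x \<otimes> inv h" by blast
  then have "x \<otimes> (h \<otimes> x \<otimes> inv h) = (h \<otimes> x \<otimes> inv h) \<otimes> x"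
    using conj_eq_iff[of x "h \<otimes> x \<otimes> inv h"] x h by simp
  then show ?thesis unfolding cent_def using x h by simp
qed

lemma pow_Z_distrib: "a \<in> carrier G \<Longrightarrow> z \<in> Z \<Longrightarrow> (a \<otimes> z) [^] (n::nat) = a [^] n \<otimes> z [^] n"
  using pow_mult_distrib Z_comm Z_car by metis

lemma comm_central:
  assumes a: "a \<in> carrier G" and b: "b \<in> carrier G"
  shows "comm a b \<in> Z"
proof (cases "b \<in> Z")
  case True
  then have "a \<otimes> b \<otimes> inv a = b" using conj_Z a by simp
  then show ?thesis unfolding comm_def using b Z_one by simp
next
  case False
  have "a \<otimes> b \<otimes> inv a \<in> cent b" by (rule orbit_in_cent[OF b False a])
  then obtain i z0 where iz: "i < p" "z0 \<in> Z" "a \<otimes> b \<otimes> inv a = b [^] i \<otimes> z0"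
    using cent_eq[OF b False] by auto
  have z0c: "z0 \<in> carrier G" using iz Z_car by auto
  have it: "\<exists>z\<in>Z. a [^] n \<otimes> b \<otimes> inv (a [^] n) = b [^] (i ^ n) \<otimes> z" for n
  proof (induction n)
    case 0 show ?case using b Z_one by (intro bexI[of _ \<one>]) auto
  next
    case (Suc n)
    then obtain z where z: "z \<in> Z" "a [^] n \<otimes> b \<otimes> inv (a [^] n) = b [^] (i ^ n) \<otimes> z" by blast
    have zc: "z \<in> carrier G" using z Z_car by auto
    have "a [^] Suc n = a \<otimes> a [^] n" using a nat_pow_Suc2 by blast
    then have "a [^] Suc n \<otimes> b \<otimes> inv (a [^] Suc n) = a \<otimes> (a [^] n \<otimes> b \<otimes> inv (a [^] n)) \<otimes> inv a"
      using a b by (simp add: m_assoc inv_mult_group)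
    also have "\<dots> = a \<otimes> (b [^] (i ^ n) \<otimes> z) \<otimes> inv a" using z by simp
    also have "\<dots> = (a \<otimes> b [^] (i ^ n) \<otimes> inv a) \<otimes> z"
      using a b zc Z_comm[OF z(1), of "inv a"] by (simp add: m_assoc)
    also have "\<dots> = (b [^] i \<otimes> z0) [^] (i ^ n) \<otimes> z" using conj_pow[OF a b] iz by simp
    also have "\<dots> = b [^] (i * i ^ n) \<otimes> (z0 [^] (i ^ n) \<otimes> z)"
      using pow_Z_distrib[of "b [^] i" z0 "i ^ n"] iz b z0c zc by (simp add: nat_pow_pow m_assoc)
    finally show ?case using Z_mult[OF Z_pow[OF iz(2)] z(1)] by auto
  qed
  obtain z where z: "z \<in> Z" "a [^] p \<otimes> b \<otimes> inv (a [^] p) = b [^] (i ^ p) \<otimes> z" using it by blast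
  have "b [^] (i ^ p) = b [^] i" using pow_mod[OF b, of "i ^ p"] pow_mod[OF b, of i] fermat_own[OF pp, of i] by simp
  then have e: "b [^] (1::nat) \<otimes> \<one> = b [^] i \<otimes> z" using z expo[OF a] b by simp
  have i0: "i \<noteq> 0"
  proof
    assume "i = 0"
    then have "b = z" using e b z Z_car by simp
    then show False using False z by simp
  qed
  then have "1 = i" using pow_Z_eq[OF b False _ iz(1) Z_one z(1) e] by simp
  then have i1: "i = 1" by simp
  have "a \<otimes> b \<otimes> inv a = b \<otimes> z0" using iz b i1 by simp
  then have "comm a b = b \<otimes> z0 \<otimes> inv b" unfolding comm_def by simp
  also have "\<dots> = z0 \<otimes> b \<otimes> inv b" using Z_comm[OF iz(2) b] by simp
  also have "\<dots> = z0" using b z0c by (simp add: m_assoc)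
  finally show ?thesis using iz by simp
qed


lemma comm_car: "a \<in> carrier G \<Longrightarrow> b \<in> carrier G \<Longrightarrow> comm a b \<in> carrier G"
  unfolding comm_def by simp

lemma swap: "a \<in> carrier G \<Longrightarrow> b \<in> carrier G \<Longrightarrow> a \<otimes> b = comm a b \<otimes> (b \<otimes> a)"
  unfolding comm_def by (simp add: m_assoc)

lemma comm_swap_conj: "a \<in> carrier G \<Longrightarrow> b \<in> carrier G \<Longrightarrow> a \<otimes> b \<otimes> inv a = comm a b \<otimes> b"
  unfolding comm_def by (simp add: m_assoc)

lemma Z_comm_assoc: "z \<in> Z \<Longrightarrow> a \<in> carrier G \<Longrightarrow> b \<in> carrier G \<Longrightarrow> a \<otimes> (z \<otimes> b) = z \<otimes> (a \<otimes> b)"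
proof -
  assume z: "z \<in> Z" and a: "a \<in> carrier G" and b: "b \<in> carrier G"
  have zc: "z \<in> carrier G" using z Z_car by simp
  have "a \<otimes> (z \<otimes> b) = (a \<otimes> z) \<otimes> b" using a b zc by (simp add: m_assoc)
  also have "\<dots> = (z \<otimes> a) \<otimes> b" using Z_comm[OF z a] by simp
  finally show ?thesis using a b zc by (simp add: m_assoc)
qed

lemma comm_mult_left:
  assumes a: "a \<in> carrier G" and b: "b \<in> carrier G" and c: "c \<in> carrier G"
  shows "comm (a \<otimes> b) c = comm a c \<otimes> comm b c"
proof -
  define k where "k = comm b c"
  have kZ: "k \<in> Z" using comm_central b c k_def by simp
  have kc: "k \<in> carrier G" using kZ Z_car by simp
  have bc: "b \<otimes> c \<otimes> inv b = k \<otimes> c" using comm_swap_conj[OF b c] k_def by simp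
  have "comm (a \<otimes> b) c = a \<otimes> (b \<otimes> c \<otimes> inv b) \<otimes> inv a \<otimes> inv c"
    unfolding comm_def using a b c by (simp add: m_assoc inv_mult_group)
  also have "\<dots> = a \<otimes> (k \<otimes> c) \<otimes> inv a \<otimes> inv c" using bc by simp
  also have "\<dots> = k \<otimes> (a \<otimes> c) \<otimes> inv a \<otimes> inv c" using Z_comm_assoc[OF kZ a c] kc a c by (simp add: m_assoc)
  also have "\<dots> = k \<otimes> comm a c" unfolding comm_def[of a c] using a c kc by (simp add: m_assoc)
  also have "\<dots> = comm a c \<otimes> k" using Z_comm[OF kZ] comm_car a c by simp
  finally show ?thesis using k_def by simp
qed

lemma comm_inv_sym: "a \<in> carrier G \<Longrightarrow> b \<in> carrier G \<Longrightarrow> comm b a = inv (comm a b)"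
  unfolding comm_def by (simp add: inv_mult_group m_assoc)

lemma comm_mult_right:
  assumes a: "a \<in> carrier G" and b: "b \<in> carrier G" and c: "c \<in> carrier G"
  shows "comm c (a \<otimes> b) = comm c a \<otimes> comm c b"
proof -
  have "comm c (a \<otimes> b) = inv (comm (a \<otimes> b) c)" using comm_inv_sym[of "a \<otimes> b" c] a b c by simp
  also have "\<dots> = inv (comm a c \<otimes> comm b c)" using comm_mult_left[OF a b c] by simp
  also have "\<dots> = inv (comm b c) \<otimes> inv (comm a c)" using comm_car a b c by (simp add: inv_mult_group)
  also have "\<dots> = comm c b \<otimes> comm c a" using comm_inv_sym[of b c] comm_inv_sym[of a c] a b c by simp
  also have "\<dots> = comm c a \<otimes> comm c b" using Z_comm[OF comm_central[OF c b] comm_car[OF c a]] by simp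
  finally show ?thesis .
qed

lemma comm_self: "a \<in> carrier G \<Longrightarrow> comm a a = \<one>"
  unfolding comm_def by (simp add: m_assoc)

lemma comm_Z_right: "a \<in> carrier G \<Longrightarrow> z \<in> Z \<Longrightarrow> comm a z = \<one>"
proof -
  assume a: "a \<in> carrier G" and z: "z \<in> Z"
  have "a \<otimes> z = z \<otimes> a" using Z_comm[OF z a] by simp
  then show ?thesis using comm_Z_iff[OF a Z_car[OF z]] by simp
qed

lemma comm_inv_left: "a \<in> carrier G \<Longrightarrow> b \<in> carrier G \<Longrightarrow> comm (inv a) b = inv (comm a b)"
proof -
  assume a: "a \<in> carrier G" and b: "b \<in> carrier G"
  have "comm (inv a) b \<otimes> comm a b = comm (inv a \<otimes> a) b" using comm_mult_left[of "inv a" a b] a b by simp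
  also have "\<dots> = \<one>" using a b comm_Z_iff by simp
  finally have e: "comm (inv a) b \<otimes> comm a b = \<one>" .
  show ?thesis using inv_equality[OF e] a b comm_car by simp
qed

lemma comm_inv_right: "a \<in> carrier G \<Longrightarrow> b \<in> carrier G \<Longrightarrow> comm a (inv b) = inv (comm a b)"
proof -
  assume a: "a \<in> carrier G" and b: "b \<in> carrier G"
  have "comm a (inv b) \<otimes> comm a b = comm a (inv b \<otimes> b)" using comm_mult_right[of "inv b" b a] a b by simp
  also have "\<dots> = \<one>" using a b comm_Z_iff by simp
  finally have e: "comm a (inv b) \<otimes> comm a b = \<one>" .
  show ?thesis using inv_equality[OF e] a b comm_car by simp
qed

end


lemma subseqs_map: "subseqs (map f xs) = map (map f) (subseqs xs)"
  by (induction xs) (auto simp: Let_def)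

lemma subseq_mset: "J \<in> set (subseqs ys) \<Longrightarrow> mset J \<subseteq># mset ys"
proof (induction ys arbitrary: J)
  case Nil then show ?case by simp
next
  case (Cons a ys)
  then have "J \<in> (Cons a) ` set (subseqs ys) \<or> J \<in> set (subseqs ys)" by (auto simp: Let_def)
  then show ?case
  proof
    assume "J \<in> (Cons a) ` set (subseqs ys)"
    then obtain J' where "J = a # J'" "J' \<in> set (subseqs ys)" by auto
    then show ?thesis using Cons.IH by simp
  next
    assume "J \<in> set (subseqs ys)"
    then have "mset J \<subseteq># mset ys" using Cons.IH by simp
    moreover have "mset ys \<subseteq># add_mset a (mset ys)" by (metis add_mset_add_single mset_subset_eq_add_left)
    ultimately show ?thesis by (simp add: subset_mset.order_trans)
  qed
qed

lemma subseqs_opt: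
  "l \<in> set (subseqs (None # map Some ys)) \<Longrightarrow>
   \<exists>J \<in> set (subseqs ys). l = None # map Some J \<or> l = map Some J"
  by (auto simp: Let_def subseqs_map)

context hgrp
begin

lemma list_prod_Nil [simp]: "list_prod G [] = \<one>" by (simp add: list_prod_def)
lemma list_prod_Cons [simp]: "list_prod G (x # xs) = x \<otimes> list_prod G xs" by (simp add: list_prod_def)
lemma list_prod_car: "set xs \<subseteq> carrier G \<Longrightarrow> list_prod G xs \<in> carrier G"
  by (induction xs) auto
lemma list_prod_append: "set xs \<subseteq> carrier G \<Longrightarrow> set ys \<subseteq> carrier G \<Longrightarrow>
  list_prod G (xs @ ys) = list_prod G xs \<otimes> list_prod G ys"
  by (induction xs) (auto simp: m_assoc list_prod_car)

definition dlog where "dlog s z = (SOME i. i < p \<and> z = s [^] i)"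

lemma dlog: "s \<in> Z \<Longrightarrow> s \<noteq> \<one> \<Longrightarrow> z \<in> Z \<Longrightarrow> s [^] dlog s z = z"
proof -
  assume s: "s \<in> Z" "s \<noteq> \<one>" and z: "z \<in> Z"
  have "\<exists>i. i < p \<and> z = s [^] i" using Z_powers[OF s] z by auto
  then show ?thesis unfolding dlog_def by (metis (mono_tags, lifting) someI_ex)
qed

lemma comm_prod_left:
  assumes s: "s \<in> Z" "s \<noteq> \<one>" and c: "c \<in> carrier G" and ys: "set ys \<subseteq> carrier G"
  shows "comm (list_prod G ys) c = s [^] (\<Sum>y\<leftarrow>ys. dlog s (comm y c))"
  using ys
proof (induction ys)
  case Nil then show ?case using c comm_Z_iff by simp
next
  case (Cons y ys)
  have y: "y \<in> carrier G" and ys': "set ys \<subseteq> carrier G" using Cons.prems by auto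
  have "comm (list_prod G (y # ys)) c = comm y c \<otimes> comm (list_prod G ys) c"
    using comm_mult_left[OF y list_prod_car[OF ys'] c] by simp
  also have "\<dots> = s [^] dlog s (comm y c) \<otimes> s [^] (\<Sum>y\<leftarrow>ys. dlog s (comm y c))"
    using dlog[OF s comm_central[OF y c]] Cons.IH[OF ys'] by simp
  also have "\<dots> = s [^] (\<Sum>y\<leftarrow>y # ys. dlog s (comm y c))"
    using s Z_car by (simp add: nat_pow_mult)
  finally show ?case .
qed

lemma comm_prod_right:
  assumes s: "s \<in> Z" "s \<noteq> \<one>" and c: "c \<in> carrier G" and ys: "set ys \<subseteq> carrier G"
  shows "comm c (list_prod G ys) = s [^] (\<Sum>y\<leftarrow>ys. dlog s (comm c y))"
  using ys
proof (induction ys)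
  case Nil then show ?case using c comm_Z_iff by simp
next
  case (Cons y ys)
  have y: "y \<in> carrier G" and ys': "set ys \<subseteq> carrier G" using Cons.prems by auto
  have "comm c (list_prod G (y # ys)) = comm c y \<otimes> comm c (list_prod G ys)"
    using comm_mult_right[OF y list_prod_car[OF ys'] c] by simp
  also have "\<dots> = s [^] dlog s (comm c y) \<otimes> s [^] (\<Sum>y\<leftarrow>ys. dlog s (comm c y))"
    using dlog[OF s comm_central[OF c y]] Cons.IH[OF ys'] by simp
  also have "\<dots> = s [^] (\<Sum>y\<leftarrow>y # ys. dlog s (comm c y))"
    using s Z_car by (simp add: nat_pow_mult)
  finally show ?case .
qed

lemma central_of:
  assumes g: "g \<in> carrier G" "g \<notin> Z" and ys: "ys \<in> carrier G" and gys: "comm g ys \<noteq> \<one>"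
    and u: "u \<in> carrier G" and gu: "comm g u = \<one>" and uys: "comm u ys = \<one>"
  shows "u \<in> Z"
proof -
  have "u \<in> cent g" using gu comm_Z_iff[OF g(1) u] u unfolding cent_def by simp
  then obtain i z where iz: "i < p" "z \<in> Z" "u = g [^] i \<otimes> z" using cent_eq[OF g] by auto
  have zc: "z \<in> carrier G" using iz Z_car by simp
  show ?thesis
  proof (cases "i = 0")
    case True then show ?thesis using iz zc by simp
  next
    case False
    have H: "subgroup (cent ys) G" using cent_subgroup[OF ys] .
    have "u \<in> cent ys" using uys comm_Z_iff[OF u ys] u unfolding cent_def by simp
    moreover have "inv z \<in> cent ys" using Z_inv[OF iz(2)] cent_props[OF ys] by auto
    ultimately have "u \<otimes> inv z \<in> cent ys" using subgroup.m_closed[OF H] by simp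
    moreover have "u \<otimes> inv z = g [^] i" using iz g zc by (simp add: m_assoc)
    ultimately have "g [^] i \<in> cent ys" by simp
    moreover have "\<not> p dvd i" using False iz(1) by (simp add: nat_dvd_not_less)
    ultimately have "g \<in> cent ys" using pow_coprime_mem[OF H g(1)] by simp
    then have "g \<otimes> ys = ys \<otimes> g" unfolding cent_def by simp
    then show ?thesis using gys comm_Z_iff[OF g(1) ys] by simp
  qed
qed

lemma prod_K:
  assumes g: "g \<in> carrier G" and X: "\<forall>x\<in>set X. \<exists>c\<in>Z. x = c \<otimes> g"
  shows "\<exists>C\<in>Z. list_prod G X = g [^] length X \<otimes> C"
  using X
proof (induction X)
  case Nil then show ?case using Z_one by (intro bexI[of _ \<one>]) auto
next
  case (Cons x X)
  obtain C where C: "C \<in> Z" "list_prod G X = g [^] length X \<otimes> C" using Cons by auto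
  obtain c where c: "c \<in> Z" "x = c \<otimes> g" using Cons.prems by auto
  have cc: "c \<in> carrier G" "C \<in> carrier G" using c C Z_car by auto
  have "list_prod G (x # X) = c \<otimes> g \<otimes> (g [^] length X \<otimes> C)" using c C by simp
  also have "\<dots> = (g \<otimes> g [^] length X) \<otimes> (c \<otimes> C)"
    using cc g Z_comm[OF c(1), of g] Z_comm_assoc[OF c(1)] by (simp add: m_assoc)
  also have "\<dots> = g [^] length (x # X) \<otimes> (c \<otimes> C)" using g nat_pow_Suc2 by simp
  finally show ?case using Z_mult[OF c(1) C(1)] by blast
qed

lemma move_past:
  assumes t: "t \<in> Z" and y: "y \<in> carrier G" and xs: "set xs \<subseteq> carrier G"
    and h: "\<forall>x\<in>set xs. y \<otimes> x = t \<otimes> (x \<otimes> y)"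
  shows "y \<otimes> list_prod G xs = t [^] length xs \<otimes> (list_prod G xs \<otimes> y)"
  using xs h
proof (induction xs)
  case Nil then show ?case using y by simp
next
  case (Cons x xs)
  have x: "x \<in> carrier G" and xs': "set xs \<subseteq> carrier G" using Cons.prems by auto
  have tc: "t \<in> carrier G" using t Z_car by simp
  have P: "list_prod G xs \<in> carrier G" using list_prod_car[OF xs'] .
  have "y \<otimes> list_prod G (x # xs) = (y \<otimes> x) \<otimes> list_prod G xs" using x y P by (simp add: m_assoc)
  also have "\<dots> = t \<otimes> (x \<otimes> (y \<otimes> list_prod G xs))" using Cons.prems x y P tc by (simp add: m_assoc)
  also have "\<dots> = t \<otimes> (x \<otimes> (t [^] length xs \<otimes> (list_prod G xs \<otimes> y)))" using Cons by simp
  also have "\<dots> = t \<otimes> t [^] length xs \<otimes> (x \<otimes> (list_prod G xs \<otimes> y))"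
    using Z_comm_assoc[OF Z_pow[OF t], of x] x y P tc by (simp add: m_assoc)
  also have "\<dots> = t [^] length (x # xs) \<otimes> (list_prod G (x # xs) \<otimes> y)"
    using tc nat_pow_Suc2 x y P by (simp add: m_assoc)
  finally show ?case .
qed

lemma arrange:
  assumes t: "t \<in> Z" "t \<noteq> \<one>" and y1: "y1 \<in> carrier G" and X: "set X \<subseteq> carrier G"
    and tls: "set tls \<subseteq> carrier G" and h: "\<forall>x\<in>set X. y1 \<otimes> x = t \<otimes> (x \<otimes> y1)"
    and lenX: "length X \<ge> p - 1"
    and T0: "list_prod G X \<otimes> (y1 \<otimes> list_prod G tls) \<in> Z"
  shows "\<exists>L. mset L = mset X + mset (y1 # tls) \<and> list_prod G L = \<one>"
proof -
  define T where "T = list_prod G X \<otimes> (y1 \<otimes> list_prod G tls)"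
  have TZ: "T \<in> Z" using T0 T_def by simp
  have Tc: "T \<in> carrier G" using TZ Z_car by simp
  obtain m where m: "m < p" "inv T = t [^] m" using Z_powers[OF t] Z_inv[OF TZ] by auto
  define k where "k = length X"
  have mk: "m \<le> k" using m lenX k_def by simp
  define A where "A = take (k - m) X"
  define B where "B = drop (k - m) X"
  have AB: "A @ B = X" unfolding A_def B_def by simp
  have lenB: "length B = m" unfolding B_def k_def using mk k_def by simp
  have sA: "set A \<subseteq> set X" unfolding A_def by (rule set_take_subset)
  have sB: "set B \<subseteq> set X" unfolding B_def by (rule set_drop_subset)
  have Ac: "set A \<subseteq> carrier G" using sA X by blast
  have Bc: "set B \<subseteq> carrier G" using sB X by blast
  have hB: "\<forall>x\<in>set B. y1 \<otimes> x = t \<otimes> (x \<otimes> y1)" using h sB by blast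
  have tc: "t \<in> carrier G" using t Z_car by simp
  define L where "L = A @ y1 # B @ tls"
  have PA: "list_prod G A \<in> carrier G" using list_prod_car[OF Ac] .
  have PB: "list_prod G B \<in> carrier G" using list_prod_car[OF Bc] .
  have Pt: "list_prod G tls \<in> carrier G" using list_prod_car[OF tls] .
  have PX: "list_prod G X = list_prod G A \<otimes> list_prod G B"
    using list_prod_append[OF Ac Bc] AB by simp
  have ytc: "set (y1 # B @ tls) \<subseteq> carrier G" using y1 Bc tls by auto
  have s1: "list_prod G L = list_prod G A \<otimes> list_prod G (y1 # B @ tls)"
    unfolding L_def by (rule list_prod_append[OF Ac ytc])
  have s2: "list_prod G (y1 # B @ tls) = y1 \<otimes> (list_prod G B \<otimes> list_prod G tls)"
    using list_prod_append[OF Bc tls] by simp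
  have s3: "y1 \<otimes> list_prod G B = t [^] m \<otimes> (list_prod G B \<otimes> y1)"
    using move_past[OF t(1) y1 Bc hB] lenB by simp
  have tmc: "t [^] m \<in> carrier G" using tc by simp
  have tmZ: "t [^] m \<in> Z" using Z_pow[OF t(1)] by simp
  have "list_prod G L = list_prod G A \<otimes> ((y1 \<otimes> list_prod G B) \<otimes> list_prod G tls)"
    using s1 s2 y1 PB Pt by (simp add: m_assoc)
  also have "\<dots> = list_prod G A \<otimes> (t [^] m \<otimes> ((list_prod G B \<otimes> y1) \<otimes> list_prod G tls))"
    using s3 tmc PB Pt y1 by (simp add: m_assoc)
  also have "\<dots> = t [^] m \<otimes> (list_prod G A \<otimes> ((list_prod G B \<otimes> y1) \<otimes> list_prod G tls))"
    using Z_comm_assoc[OF tmZ PA] PB Pt y1 by simp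
  also have "\<dots> = t [^] m \<otimes> T"
    unfolding T_def PX using PA PB Pt y1 by (simp add: m_assoc)
  also have "\<dots> = \<one>" using m(2)[symmetric] Tc by simp
  finally have "list_prod G L = \<one>" .
  moreover have "mset L = mset X + mset (y1 # tls)" unfolding L_def by (simp flip: AB)
  ultimately show ?thesis by blast
qed


lemma sum_list_int: "(\<Sum>y\<leftarrow>J. int (f y)) = int (\<Sum>y\<leftarrow>J. f y)"
  by (induction J) auto

lemma mset_take_sub: "mset (take k xs) \<subseteq># mset xs"
proof -
  have "mset xs = mset (take k xs) + mset (drop k xs)"
    using mset_append[of "take k xs" "drop k xs"] by simp
  then show ?thesis by (metis mset_subset_eq_add_left)
qed

lemma main:
  assumes odd: "odd p" and Ssub: "set_mset S \<subseteq> carrier G" and Ssize: "size S = 3 * p - 2"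
    and nc: "\<forall>x\<in>#S. x \<notin> Z" and g0: "g0 \<in> carrier G - Z" and Kdef: "K = zclass G p g0"
    and Ksize: "size (filter_mset (\<lambda>x. x \<in> K) S) = p"
    and conjK: "\<forall>x\<in>#filter_mset (\<lambda>x. x \<in> K) S. \<forall>y\<in>#filter_mset (\<lambda>x. x \<in> K) S. conjugate G x y"
  shows "\<exists>T. T \<subseteq># S \<and> product_one G T"
proof -
  define SK where "SK = filter_mset (\<lambda>x. x \<in> K) S"
  define SO where "SO = filter_mset (\<lambda>x. x \<notin> K) S"
  have Spart: "S = SK + SO" unfolding SK_def SO_def by (rule multiset_partition)
  have p2: "p \<ge> 2" using pp prime_ge_2_nat by blast
  have p3: "p \<ge> 3" using p2 odd by (cases "p = 2") auto
  have "size S = size SK + size SO" using arg_cong[OF Spart, of size] by simp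
  then have sizeSO: "size SO = 2 * p - 2" using Ssize Ksize SK_def by simp
  obtain xsK where xsK: "mset xsK = SK" using ex_mset by blast
  obtain ysO where ysO: "mset ysO = SO" using ex_mset by blast
  have lenK: "length xsK = p" using arg_cong[OF xsK, of size] Ksize SK_def by simp
  have lenO: "length ysO = 2 * p - 2" using arg_cong[OF ysO, of size] sizeSO by simp
  have setK: "set xsK = set_mset SK" using arg_cong[OF xsK, of set_mset] by simp
  have setO: "set ysO = set_mset SO" using arg_cong[OF ysO, of set_mset] by simp
  have Kel: "x \<in> carrier G \<and> x \<notin> Z \<and> x \<in> K" if "x \<in> set xsK" for x
    using that setK SK_def Ssub nc by auto
  have Oel: "y \<in> carrier G \<and> y \<notin> Z \<and> y \<notin> K" if "y \<in> set ysO" for y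
    using that setO SO_def Ssub nc by auto
  define g where "g = xsK ! 0"
  have gin: "g \<in> set xsK" unfolding g_def using lenK p2 by simp
  have gc: "g \<in> carrier G" and gZ: "g \<notin> Z" and gK: "g \<in> K" using Kel[OF gin] by auto
  have Kterm: "\<exists>c\<in>Z. x = c \<otimes> g" if x: "x \<in> set xsK" for x
  proof -
    have "conjugate G g x" using conjK gin x setK SK_def by auto
    then obtain h where h: "h \<in> carrier G" "x = h \<otimes> g \<otimes> inv h" unfolding conjugate_def by blast
    then have "x = comm h g \<otimes> g" using comm_swap_conj[OF h(1) gc] by simp
    then show ?thesis using comm_central[OF h(1) gc] by blast
  qed
  have noncomm: "comm g y \<noteq> \<one>" if y: "y \<in> set ysO" for y
  proof
    assume c1: "comm g y = \<one>"
    have yc: "y \<in> carrier G" and yZ: "y \<notin> Z" and yK: "y \<notin> K" using Oel[OF y] by auto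
    have "g \<otimes> y = y \<otimes> g" using c1 comm_Z_iff[OF gc yc] by simp
    then have "y \<in> cent g" unfolding cent_def using yc by simp
    then obtain i z where iz: "i < p" "z \<in> Z" "y = g [^] i \<otimes> z" using cent_eq[OF gc gZ] by auto
    have zc: "z \<in> carrier G" using iz Z_car by simp
    show False
    proof (cases "i = 0")
      case True then show False using iz yZ zc by simp
    next
      case False
      obtain k u where ku: "1 \<le> k" "k \<le> p - 1" "u \<in> Z" "g = g0 [^] k \<otimes> u"
        using gK Kdef unfolding zclass_def by blast
      have uc: "u \<in> carrier G" using ku Z_car by simp
      have g0c: "g0 \<in> carrier G" using g0 by simp
      have "y = (g0 [^] k \<otimes> u) [^] i \<otimes> z" using iz ku by simp
      also have "\<dots> = g0 [^] (k * i) \<otimes> (u [^] i \<otimes> z)"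
        using pow_Z_distrib[of "g0 [^] k" u i] ku g0c uc zc by (simp add: nat_pow_pow m_assoc)
      also have "\<dots> = g0 [^] ((k * i) mod p) \<otimes> (u [^] i \<otimes> z)" using pow_mod[OF g0c] by simp
      finally have ye: "y = g0 [^] ((k * i) mod p) \<otimes> (u [^] i \<otimes> z)" .
      have "\<not> p dvd k" using ku p2 by (simp add: nat_dvd_not_less)
      moreover have "\<not> p dvd i" using False iz(1) by (simp add: nat_dvd_not_less)
      ultimately have "\<not> p dvd (k * i)" using pp by (simp add: prime_dvd_mult_iff)
      then have m1: "1 \<le> (k * i) mod p" "(k * i) mod p \<le> p - 1" using p2
        by (auto simp: dvd_eq_mod_eq_0 less_Suc_eq_le[symmetric] Suc_le_eq)
      have "u [^] i \<otimes> z \<in> Z" using Z_mult[OF Z_pow[OF ku(3)] iz(2)] .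
      then have "y \<in> zclass G p g0" unfolding zclass_def using ye m1 by blast
      then show False using yK Kdef by simp
    qed
  qed
  define ys where "ys = ysO ! 0"
  have ysin: "ys \<in> set ysO" unfolding ys_def using lenO p3 by simp
  have ysc: "ys \<in> carrier G" using Oel[OF ysin] by simp
  define s where "s = comm g ys"
  have sZ: "s \<in> Z" unfolding s_def using comm_central[OF gc ysc] .
  have s1: "s \<noteq> \<one>" unfolding s_def using noncomm[OF ysin] .
  have sc: "s \<in> carrier G" using sZ Z_car by simp
  define v :: "'a option \<Rightarrow> int \<times> int" where
    "v = (\<lambda>opt. case opt of None \<Rightarrow> (-1, 0) | Some y \<Rightarrow> (int (dlog s (comm y ys)), int (dlog s (comm g y))))"
  have "length (None # map Some ysO) \<ge> 2 * p - 1" using lenO p3 by simp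
  from davenport_cp2[OF pp odd this, of v]
  obtain l where l: "l \<in> set (subseqs (None # map Some ysO))" "l \<noteq> []"
    "int p dvd sum_list (map (fst \<circ> v) l)" "int p dvd sum_list (map (snd \<circ> v) l)" by blast
  obtain J where J: "J \<in> set (subseqs ysO)" "l = None # map Some J \<or> l = map Some J"
    using subseqs_opt[OF l(1)] by blast
  have JO: "mset J \<subseteq># mset ysO" using subseq_mset[OF J(1)] .
  have Jset: "set J \<subseteq> set ysO" using set_mset_mono[OF JO] by simp
  have Jc: "set J \<subseteq> carrier G" using Jset Oel by blast
  define A where "A = (\<Sum>y\<leftarrow>J. dlog s (comm y ys))"
  define B where "B = (\<Sum>y\<leftarrow>J. dlog s (comm g y))"
  have fstJ: "sum_list (map (fst \<circ> v) (map Some J)) = int A"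
    unfolding A_def v_def by (simp add: o_def sum_list_int)
  have sndJ: "sum_list (map (snd \<circ> v) (map Some J)) = int B"
    unfolding B_def v_def by (simp add: o_def sum_list_int)
  define w where "w = list_prod G J"
  have wc: "w \<in> carrier G" unfolding w_def using list_prod_car[OF Jc] .
  have cwys: "comm w ys = s [^] A" unfolding w_def A_def using comm_prod_left[OF sZ s1 ysc Jc] .
  have cgw: "comm g w = s [^] B" unfolding w_def B_def using comm_prod_right[OF sZ s1 gc Jc] .
  have dvd1: "s [^] n = \<one>" if "int p dvd int n" for n
  proof -
    have "p dvd n" using that by simp
    then show ?thesis using pow_mod[OF sc, of n] by simp
  qed
  have XK: "\<forall>x\<in>set (take k xsK). \<exists>c\<in>Z. x = c \<otimes> g" for k
  proof
    fix x assume "x \<in> set (take k xsK)"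
    then have "x \<in> set xsK" by (rule in_set_takeD)
    then show "\<exists>c\<in>Z. x = c \<otimes> g" by (rule Kterm)
  qed
  have XKc: "set (take k xsK) \<subseteq> carrier G" for k
  proof
    fix x assume "x \<in> set (take k xsK)"
    then have "x \<in> set xsK" by (rule in_set_takeD)
    then show "x \<in> carrier G" using Kel by blast
  qed
  have key: "\<exists>k. p - 1 \<le> k \<and> J \<noteq> [] \<and> list_prod G (take k xsK) \<otimes> w \<in> Z"
  proof (cases "l = map Some J")
    case True
    have Jne: "J \<noteq> []" using l(2) True by auto
    have "s [^] A = \<one>" using dvd1 l(3) True fstJ by simp
    moreover have "s [^] B = \<one>" using dvd1 l(4) True sndJ by simp
    ultimately have wZ: "w \<in> Z" using central_of[OF gc gZ ysc _ wc] cwys cgw s1 s_def by simp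
    obtain C where C: "C \<in> Z" "list_prod G (take p xsK) = g [^] length (take p xsK) \<otimes> C"
      using prod_K[OF gc XK] by blast
    have "list_prod G (take p xsK) = C" using C lenK expo[OF gc] Z_car by simp
    then have "list_prod G (take p xsK) \<otimes> w \<in> Z" using Z_mult[OF C(1) wZ] by simp
    then show ?thesis using Jne by (intro exI[of _ p]) auto
  next
    case False
    then have lJ: "l = None # map Some J" using J(2) by simp
    have fsum: "sum_list (map (fst \<circ> v) l) = -1 + int A" using lJ fstJ v_def by simp
    have ssum: "sum_list (map (snd \<circ> v) l) = int B" using lJ sndJ v_def by simp
    have d1: "int p dvd int A - 1" using l(3) fsum by simp
    have A1: "A \<ge> 1"
    proof (rule ccontr)
      assume "\<not> A \<ge> 1"
      then have "A = 0" by simp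
      then have "p = 1" using d1 by simp
      then show False using p2 by simp
    qed
    have "int (A - 1) = int A - 1" using A1 by simp
    then have "p dvd A - 1" using d1 by (metis int_dvd_int_iff)
    then have "(A - 1) mod p = 0" by simp
    then have "((A - 1) + 1) mod p = 1 mod p" by (metis mod_add_left_eq add_0)
    then have Am: "A mod p = 1" using A1 p2 by simp
    have Jne: "J \<noteq> []"
    proof
      assume "J = []"
      then have "A = 0" unfolding A_def by simp
      then show False using Am by simp
    qed
    have sA: "s [^] A = s" using pow_mod[OF sc, of A] Am sc by simp
    have sB: "s [^] B = \<one>" using dvd1 l(4) ssum by simp
    define w' where "w' = w \<otimes> inv g"
    have w'c: "w' \<in> carrier G" unfolding w'_def using wc gc by simp
    have "comm w' ys = comm w ys \<otimes> comm (inv g) ys" unfolding w'_def using comm_mult_left wc gc ysc by simp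
    also have "\<dots> = s \<otimes> inv s" using cwys sA comm_inv_left[OF gc ysc] s_def by simp
    also have "\<dots> = \<one>" using sc by simp
    finally have c1: "comm w' ys = \<one>" .
    have "comm g w' = comm g w \<otimes> comm g (inv g)" unfolding w'_def using comm_mult_right wc gc by simp
    also have "\<dots> = \<one>" using cgw sB comm_inv_right[OF gc gc] comm_self[OF gc] by simp
    finally have c2: "comm g w' = \<one>" .
    have w'Z: "w' \<in> Z" using central_of[OF gc gZ ysc _ w'c c2 c1] s1 s_def by simp
    have w'c': "w' \<in> carrier G" using w'c .
    have ww: "w = w' \<otimes> g" unfolding w'_def using wc gc by (simp add: m_assoc)
    obtain C where C: "C \<in> Z" "list_prod G (take (p - 1) xsK) = g [^] length (take (p - 1) xsK) \<otimes> C"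
      using prod_K[OF gc XK] by blast
    have Cc: "C \<in> carrier G" using C Z_car by simp
    have lt: "length (take (p - 1) xsK) = p - 1" using lenK by simp
    have sp: "Suc (p - 1) = p" using p2 by simp
    have gp: "g [^] (p - 1) \<otimes> g = \<one>"
      using nat_pow_Suc[of g "p - 1"] expo[OF gc] sp by simp
    have "list_prod G (take (p - 1) xsK) \<otimes> w = g [^] (p - 1) \<otimes> C \<otimes> (w' \<otimes> g)"
      using C lt ww by simp
    also have "\<dots> = C \<otimes> (g [^] (p - 1) \<otimes> (w' \<otimes> g))"
      using Z_comm_assoc[OF C(1), of "g [^] (p - 1)" "w' \<otimes> g"] gc Cc w'c by (simp add: m_assoc)
    also have "\<dots> = C \<otimes> (w' \<otimes> (g [^] (p - 1) \<otimes> g))"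
      using Z_comm_assoc[OF w'Z, of "g [^] (p - 1)" g] gc by (simp add: m_assoc)
    also have "\<dots> = C \<otimes> w'" using gp w'c by simp
    finally have "list_prod G (take (p - 1) xsK) \<otimes> w \<in> Z" using Z_mult[OF C(1) w'Z] by simp
    then show ?thesis using Jne by (intro exI[of _ "p - 1"]) auto
  qed
  then obtain k where k: "p - 1 \<le> k" "J \<noteq> []" "list_prod G (take k xsK) \<otimes> w \<in> Z" by blast
  define X where "X = take k xsK"
  have lenX: "length X \<ge> p - 1" unfolding X_def using k lenK by simp
  obtain y1 tls where Jy: "J = y1 # tls" using k(2) by (cases J) auto
  have y1in: "y1 \<in> set ysO" using Jset Jy by simp
  have y1c: "y1 \<in> carrier G" using Oel[OF y1in] by simp
  have tlsc: "set tls \<subseteq> carrier G" using Jc Jy by simp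
  define t where "t = comm y1 g"
  have tZ: "t \<in> Z" unfolding t_def using comm_central[OF y1c gc] .
  have t1: "t \<noteq> \<one>"
  proof
    assume "t = \<one>"
    then have "inv (comm g y1) = \<one>" unfolding t_def using comm_inv_sym[OF gc y1c] by simp
    then have "inv (inv (comm g y1)) = \<one>" by simp
    then have "comm g y1 = \<one>" using comm_car[OF gc y1c] by simp
    then show False using noncomm[OF y1in] by simp
  qed
  have hX: "\<forall>x\<in>set X. y1 \<otimes> x = t \<otimes> (x \<otimes> y1)"
  proof
    fix x assume x: "x \<in> set X"
    obtain c where c: "c \<in> Z" "x = c \<otimes> g" using XK x X_def by blast
    have cc: "c \<in> carrier G" using c Z_car by simp
    have "comm y1 x = comm y1 c \<otimes> comm y1 g" using c comm_mult_right[OF cc gc y1c] by simp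
    also have "\<dots> = t" using comm_Z_right[OF y1c c(1)] t_def comm_car[OF y1c gc] by simp
    finally have "comm y1 x = t" .
    then show "y1 \<otimes> x = t \<otimes> (x \<otimes> y1)" using swap[OF y1c] c cc gc by simp
  qed
  have T0: "list_prod G X \<otimes> (y1 \<otimes> list_prod G tls) \<in> Z" using k(3) X_def w_def Jy by simp
  obtain L where L: "mset L = mset X + mset (y1 # tls)" "list_prod G L = \<one>"
    using arrange[OF tZ t1 y1c XKc[of k, folded X_def] tlsc hX lenX T0] by blast
  have "mset X \<subseteq># SK" unfolding X_def using mset_take_sub[of k xsK] xsK by simp
  moreover have "mset (y1 # tls) \<subseteq># SO" using JO Jy ysO by simp
  ultimately have "mset X + mset (y1 # tls) \<subseteq># SK + SO" by (rule subset_mset.add_mono)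
  then have "mset L \<subseteq># S" using L(1) Spart by simp
  moreover have "product_one G (mset L)" unfolding product_one_def using L by auto
  ultimately show ?thesis by blast
qed

end

theorem theorem2p8:
  fixes G :: "('a, 'b) monoid_scheme" and p :: nat and S :: "'a multiset" and K :: "'a set"
  assumes "prime p" and "odd p"
    and "group G"
    and "finite (carrier G)" and "card (carrier G) = p ^ 3"
    and "\<forall>x \<in> carrier G. x [^]\<^bsub>G\<^esub> p = \<one>\<^bsub>G\<^esub>"
    and "\<exists>x \<in> carrier G. \<exists>y \<in> carrier G. x \<otimes>\<^bsub>G\<^esub> y \<noteq> y \<otimes>\<^bsub>G\<^esub> x"
    and "set_mset S \<subseteq> carrier G"
    and "size S = 3 * p - 2"
    and "\<forall>x \<in># S. x \<notin> grp_center G"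
    and "\<exists>g \<in> carrier G - grp_center G. K = zclass G p g"
    and "size (filter_mset (\<lambda>x. x \<in> K) S) = p"
    and "\<forall>x \<in># filter_mset (\<lambda>x. x \<in> K) S. \<forall>y \<in># filter_mset (\<lambda>x. x \<in> K) S. conjugate G x y"
  shows "\<exists>T. T \<subseteq># S \<and> product_one G T"
proof -
  have H: "hgrp G p"
    unfolding hgrp_def hgrp_axioms_def using assms(1,3,4,5,6,7) by auto
  obtain g0 where g0: "g0 \<in> carrier G - grp_center G" "K = zclass G p g0" using assms(11) by blast
  show ?thesis
    by (rule hgrp.main[OF H assms(2) assms(8) assms(9) assms(10) g0 assms(12) assms(13)])
qed

end
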